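(* For all $m,k\in\mathbb Z$, $$[\overline{\mathfrak g}'_{(m)},\overline{\mathfrak g}'_{(k)}]\subseteq\overline{\mathfrak g}'_{(m+k)} .$$ Moreover, let $X,Y\in\mathfrak g$, $k,m\in\mathbb Z$, $s,p\in\{1,\dots,N\}$, and for $Z\in\mathfrak g$, $j\in\mathbb Z$, $t\in\{1,\dots,N\}$ let $Z_{j,t}$ denote any element of $\overline{\mathfrak g}$ with $Z_{j,t}(z_q)=\delta^t_qZz_q^j+O(z_q^{j+1})$ for all $q=1,\dots,N$. Then $$[X_{k,s},Y_{m,p}]-\delta_s^p\,[X,Y]_{k+m,s}\in\overline{\mathfrak g}'_{(k+m+1)} .$$
   Context: Let $\Sigma$ be a compact Riemann surface of genus $g$ and $A\subset\Sigma$ a finite set split into two disjoint non-empty subsets $I=\{P_1,\dots,P_N\}$ and $O=\{Q_1,\dots,Q_M\}$. Let $\mathfrak g$ be one of the complex matrix Lie algebras $\mathfrak{gl}(n)$, $\mathfrak{sl}(n)$, $\mathfrak{so}(n)$, or $\mathfrak{sp}(2n)=\{X: X^t\sigma+\sigma X=0\}$ for a fixed non-degenerate skew-symmetric matrix $\sigma$. Tyurin data: an integer $K\ge 0$, distinct points $\gamma_1,\dots,\gamma_K\in\Sigma\setminus A$ (the set $W$) and vectors $\alpha_s\in\mathbb C^n$ ($\mathbb C^{2n}$ for $\mathfrak{sp}$), with $\alpha_s^t\alpha_s=0$ in the $\mathfrak{so}$ case. Fix local coordinates $w_s$ centred at $\gamma_s$ and $z_p$ centred at $P_p$. The Lax operator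 algebra $\overline{\mathfrak g}$ is the set of meromorphic maps $L:\Sigma\to\mathfrak g$, holomorphic on $\Sigma\setminus(A\cup W)$, such that for each $s$: ($\mathfrak{gl}$) $L=L_{s,-1}w_s^{-1}+\sum_{k\ge0}L_{s,k}w_s^k$ near $\gamma_s$ with $\beta_s\in\mathbb C^n,\kappa_s\in\mathbb C$ such that $L_{s,-1}=\alpha_s\beta_s^t$, $\beta_s^t\alpha_s=0$, $L_{s,0}\alpha_s=\kappa_s\alpha_s$; ($\mathfrak{sl}$) the same with all $L_{s,k}$ traceless; ($\mathfrak{so}$) the same expansion with all $L_{s,k}$ skew-symmetric, $L_{s,-1}=\alpha_s\beta_s^t-\beta_s\alpha_s^t$, $\beta_s^t\alpha_s=0$, $L_{s,0}\alpha_s=\kappa_s\alpha_s$; ($\mathfrak{sp}$) $L=L_{s,-2}w_s^{-2}+L_{s,-1}w_s^{-1}+\sum_{k\ge0}L_{s,k}w_s^k$ with $\beta_s,\nu_s,\kappa_s$ such that $L_{s,-2}=\nu_s\alpha_s\alpha_s^t\sigma$, $L_{s,-1}=(\alpha_s\beta_s^t+\beta_s\alpha_s^t)\sigma$, $\beta_s^t\sigma\alpha_s=0$, $L_{s,0}\alpha_s=\kappa_s\alpha_s$, $\alpha_s^t\sigma L_{s,1}\alpha_s=0$. It is a Lie algebra under the pointwise commutator. For a matrix-valued meromorphic $L$ and a point $P$, $\mathrm{ord}_P(L)$ is the minimum of the orders at $P$ of the entries of $L$. Set $\overline{\mathfrak g}'_{(m)}:=\{L\in\overline{\mathfrak g}:\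 \mathrm{ord}_{P_s}(L)\ge m \text{ for all } s=1,\dots,N\}$. *)

theory Defs
  imports "HOL-Complex_Analysis.Complex_Analysis"
begin

definition is_chart :: "'s::topological_space set \<Rightarrow> ('s \<Rightarrow> complex) \<Rightarrow> bool" where
  "is_chart U \<phi> \<longleftrightarrow> open U \<and> open (\<phi> ` U) \<and> (\<exists>\<psi>. homeomorphism U (\<phi> ` U) \<phi> \<psi>)"

definition charts_compatible :: "'s::topological_space set \<Rightarrow> ('s \<Rightarrow> complex) \<Rightarrow>
    's set \<Rightarrow> ('s \<Rightarrow> complex) \<Rightarrow> bool" where
  "charts_compatible U \<phi> V \<psi> \<longleftrightarrow>
     (\<psi> \<circ> inv_into U \<phi>) holomorphic_on (\<phi> ` (U \<inter> V)) \<and>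
     (\<phi> \<circ> inv_into V \<psi>) holomorphic_on (\<psi> ` (U \<inter> V))"

definition compact_riemann_surface :: "('s::t2_space set \<times> ('s \<Rightarrow> complex)) set \<Rightarrow> bool" where
  "compact_riemann_surface atlas \<longleftrightarrow>
     compact (UNIV :: 's set) \<and> connected (UNIV :: 's set) \<and>
     (\<forall>(U, \<phi>)\<in>atlas. is_chart U \<phi>) \<and>
     (\<Union>(fst ` atlas) = UNIV) \<and>
     (\<forall>(U, \<phi>)\<in>atlas. \<forall>(V, \<psi>)\<in>atlas. charts_compatible U \<phi> V \<psi>)"

definition compatible_chart :: "('s::topological_space set \<times> ('s \<Rightarrow> complex)) set \<Rightarrow>
    's set \<Rightarrow> ('s \<Rightarrow> complex) \<Rightarrow> bool" where
  "compatible_chart atlas U \<phi> \<longleftrightarrow> is_chart U \<phi> \<and>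
     (\<forall>(V, \<psi>)\<in>atlas. charts_compatible U \<phi> V \<psi>)"

definition local_coordinate_at :: "('s::topological_space set \<times> ('s \<Rightarrow> complex)) set \<Rightarrow>
    's \<Rightarrow> 's set \<times> ('s \<Rightarrow> complex) \<Rightarrow> bool" where
  "local_coordinate_at atlas P c \<longleftrightarrow>
     compatible_chart atlas (fst c) (snd c) \<and> P \<in> fst c \<and> snd c P = 0"

type_synonym 'n mat = "complex^'n^'n"

definition cmat :: "complex \<Rightarrow> 'n::finite mat \<Rightarrow> 'n mat" where
  "cmat c M = (\<chi> i j. c * M $ i $ j)"

definition outer :: "complex^'n \<Rightarrow> complex^'n \<Rightarrow> 'n::finite mat" where
  "outer a b = (\<chi> i j. a $ i * b $ j)"

definition bil :: "complex^'n::finite \<Rightarrow> complex^'n \<Rightarrow> complex" where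
  "bil a b = (\<Sum>i\<in>UNIV. a $ i * b $ i)"

definition comm :: "'n::finite mat \<Rightarrow> 'n mat \<Rightarrow> 'n mat" where
  "comm X Y = X ** Y - Y ** X"

text \<open>This includes the case of entries vanishing identically (order +infinity).\<close>

definition ord0_ge :: "(complex \<Rightarrow> 'n::finite mat) \<Rightarrow> int \<Rightarrow> bool" where
  "ord0_ge F m \<longleftrightarrow> (\<forall>i j. \<exists>h. h analytic_on {0} \<and>
       (\<forall>\<^sub>F \<zeta> in at 0. F \<zeta> $ i $ j = \<zeta> powi m * h \<zeta>))"

definition in_coord :: "'s set \<times> ('s \<Rightarrow> complex) \<Rightarrow> ('s \<Rightarrow> 'b) \<Rightarrow> complex \<Rightarrow> 'b" where
  "in_coord c L = (\<lambda>\<zeta>. L (inv_into (fst c) (snd c) \<zeta>))"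

definition ord_ge :: "'s set \<times> ('s \<Rightarrow> complex) \<Rightarrow> ('s \<Rightarrow> 'n::finite mat) \<Rightarrow> int \<Rightarrow> bool" where
  "ord_ge c L m \<longleftrightarrow> ord0_ge (in_coord c L) m"

definition holomorphic_at :: "('s::topological_space set \<times> ('s \<Rightarrow> complex)) set \<Rightarrow>
    ('s \<Rightarrow> 'n::finite mat) \<Rightarrow> 's \<Rightarrow> bool" where
  "holomorphic_at atlas L p \<longleftrightarrow> (\<exists>(U, \<phi>)\<in>atlas. p \<in> U \<and>
     (\<forall>i j. (\<lambda>\<zeta>. L (inv_into U \<phi> \<zeta>) $ i $ j) analytic_on {\<phi> p}))"

definition meromorphic_at :: "('s::topological_space set \<times> ('s \<Rightarrow> complex)) set \<Rightarrow>
    ('s \<Rightarrow> 'n::finite mat) \<Rightarrow> 's \<Rightarrow> bool" where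
  "meromorphic_at atlas L p \<longleftrightarrow> (\<exists>(U, \<phi>)\<in>atlas. p \<in> U \<and>
     (\<forall>i j. (\<lambda>\<zeta>. L (inv_into U \<phi> \<zeta>) $ i $ j) meromorphic_on {\<phi> p}))"

datatype lie_kind = GL | SL | SO | SP

definition in_lie :: "lie_kind \<Rightarrow> 'n::finite mat \<Rightarrow> 'n mat \<Rightarrow> bool" where
  "in_lie kd \<sigma> X \<longleftrightarrow> (case kd of
      GL \<Rightarrow> True
    | SL \<Rightarrow> trace X = 0
    | SO \<Rightarrow> transpose X = - X
    | SP \<Rightarrow> transpose X ** \<sigma> + \<sigma> ** X = 0)"

text \<open>The expansion is written as
  L = L_{-2} w^-2 + L_{-1} w^-1 + L_0 + L_1 w + O(w^2) (sp) resp.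
  L = L_{-1} w^-1 + L_0 + O(w) (other cases).\<close>

definition tyurin_cond :: "lie_kind \<Rightarrow> 'n::finite mat \<Rightarrow> 's set \<times> ('s \<Rightarrow> complex) \<Rightarrow>
    complex^'n \<Rightarrow> ('s \<Rightarrow> 'n mat) \<Rightarrow> bool" where
  "tyurin_cond kd \<sigma> c \<alpha> L \<longleftrightarrow> (let F = in_coord c L in
     (case kd of
       SP \<Rightarrow> (\<exists>\<beta> \<nu> \<kappa> L0 L1.
               bil \<beta> (\<sigma> *v \<alpha>) = 0 \<and> L0 *v \<alpha> = \<kappa> *s \<alpha> \<and> bil \<alpha> (\<sigma> *v (L1 *v \<alpha>)) = 0 \<and>
               ord0_ge (\<lambda>\<zeta>. F \<zeta> - cmat (inverse (\<zeta>^2)) (cmat \<nu> (outer \<alpha> \<alpha> ** \<sigma>))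
                            - cmat (inverse \<zeta>) ((outer \<alpha> \<beta> + outer \<beta> \<alpha>) ** \<sigma>)
                            - L0 - cmat \<zeta> L1) 2)
     | SO \<Rightarrow> (\<exists>\<beta> \<kappa> L0. bil \<beta> \<alpha> = 0 \<and> L0 *v \<alpha> = \<kappa> *s \<alpha> \<and>
               ord0_ge (\<lambda>\<zeta>. F \<zeta> - cmat (inverse \<zeta>) (outer \<alpha> \<beta> - outer \<beta> \<alpha>) - L0) 1)
     | _ \<Rightarrow> (\<exists>\<beta> \<kappa> L0. bil \<beta> \<alpha> = 0 \<and> L0 *v \<alpha> = \<kappa> *s \<alpha> \<and>
               ord0_ge (\<lambda>\<zeta>. F \<zeta> - cmat (inverse \<zeta>) (outer \<alpha> \<beta>) - L0) 1)))"

text \<open>The Lax operator algebra: g-valued meromorphic maps, holomorphic off A \<union> W,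
  satisfying the Tyurin conditions at gamma_1..gamma_K (values at the poles are irrelevant).\<close>

definition lax_algebra :: "('s::topological_space set \<times> ('s \<Rightarrow> complex)) set \<Rightarrow> lie_kind \<Rightarrow>
    'n::finite mat \<Rightarrow> 's set \<Rightarrow> nat \<Rightarrow> (nat \<Rightarrow> 's) \<Rightarrow> (nat \<Rightarrow> complex^'n) \<Rightarrow>
    (nat \<Rightarrow> 's set \<times> ('s \<Rightarrow> complex)) \<Rightarrow> ('s \<Rightarrow> 'n mat) set" where
  "lax_algebra atlas kd \<sigma> A K \<gamma> \<alpha> wc = {L.
     (\<forall>x. x \<notin> A \<union> \<gamma> ` {1..K} \<longrightarrow> in_lie kd \<sigma> (L x) \<and> holomorphic_at atlas L x) \<and>
     (\<forall>x\<in>A \<union> \<gamma> ` {1..K}. meromorphic_at atlas L x) \<and>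
     (\<forall>s\<in>{1..K}. tyurin_cond kd \<sigma> (wc s) (\<alpha> s) L)}"

definition lax_filt :: "('s::topological_space set \<times> ('s \<Rightarrow> complex)) set \<Rightarrow> lie_kind \<Rightarrow>
    'n::finite mat \<Rightarrow> 's set \<Rightarrow> nat \<Rightarrow> (nat \<Rightarrow> 's) \<Rightarrow> (nat \<Rightarrow> complex^'n) \<Rightarrow>
    (nat \<Rightarrow> 's set \<times> ('s \<Rightarrow> complex)) \<Rightarrow> nat \<Rightarrow> (nat \<Rightarrow> 's set \<times> ('s \<Rightarrow> complex)) \<Rightarrow>
    int \<Rightarrow> ('s \<Rightarrow> 'n mat) set" where
  "lax_filt atlas kd \<sigma> A K \<gamma> \<alpha> wc N zc m =
     {L \<in> lax_algebra atlas kd \<sigma> A K \<gamma> \<alpha> wc. \<forall>s\<in>{1..N}. ord_ge (zc s) L m}"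

definition is_Z :: "('s::topological_space set \<times> ('s \<Rightarrow> complex)) set \<Rightarrow> lie_kind \<Rightarrow>
    'n::finite mat \<Rightarrow> 's set \<Rightarrow> nat \<Rightarrow> (nat \<Rightarrow> 's) \<Rightarrow> (nat \<Rightarrow> complex^'n) \<Rightarrow>
    (nat \<Rightarrow> 's set \<times> ('s \<Rightarrow> complex)) \<Rightarrow> nat \<Rightarrow> (nat \<Rightarrow> 's set \<times> ('s \<Rightarrow> complex)) \<Rightarrow>
    'n mat \<Rightarrow> int \<Rightarrow> nat \<Rightarrow> ('s \<Rightarrow> 'n mat) \<Rightarrow> bool" where
  "is_Z atlas kd \<sigma> A K \<gamma> \<alpha> wc N zc Z j t Zf \<longleftrightarrow>
     Zf \<in> lax_algebra atlas kd \<sigma> A K \<gamma> \<alpha> wc \<and>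
     (\<forall>q\<in>{1..N}. ord_ge (zc q)
        (\<lambda>x. Zf x - (if q = t then cmat (snd (zc q) x powi j) Z else 0)) (j + 1))"

end

theory Submission
  imports Defs
begin


lemma cmat_zero_left[simp]: "cmat 0 A = 0" by (simp add: cmat_def vec_eq_iff)
lemma cmat_one[simp]: "cmat 1 A = A" by (simp add: cmat_def vec_eq_iff)
lemma cmat_zero_right[simp]: "cmat c 0 = 0" by (simp add: cmat_def vec_eq_iff)
lemma cmat_add_left: "cmat (c + d) A = cmat c A + cmat d A"
  by (simp add: cmat_def vec_eq_iff algebra_simps)
lemma cmat_diff_left: "cmat (c - d) A = cmat c A - cmat d A"
  by (simp add: cmat_def vec_eq_iff algebra_simps)
lemma cmat_add: "cmat c (A + B) = cmat c A + cmat c B"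
  by (simp add: cmat_def vec_eq_iff algebra_simps)
lemma cmat_diff: "cmat c (A - B) = cmat c A - cmat c B"
  by (simp add: cmat_def vec_eq_iff algebra_simps)
lemma cmat_uminus: "cmat c (- A) = - cmat c A"
  by (simp add: cmat_def vec_eq_iff algebra_simps)
lemma cmat_uminus_left: "cmat (- c) A = - cmat c A"
  by (simp add: cmat_def vec_eq_iff algebra_simps)
lemma cmat_cmat[simp]: "cmat c (cmat d A) = cmat (c * d) A"
  by (simp add: cmat_def vec_eq_iff algebra_simps)
lemma cmat_mult_left[simp]: "cmat c A ** B = cmat c (A ** B)"
  by (simp add: cmat_def vec_eq_iff matrix_matrix_mult_def sum_distrib_left algebra_simps)
lemma cmat_mult_right[simp]: "A ** cmat c B = cmat c (A ** B)"
  by (simp add: cmat_def vec_eq_iff matrix_matrix_mult_def sum_distrib_left algebra_simps)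
lemma cmat_sum: "cmat c (sum f S) = sum (\<lambda>x. cmat c (f x)) S"
  by (induction S rule: infinite_finite_induct) (auto simp: cmat_add)
lemma cmat_mv: "cmat c M *v v = c *s (M *v v)"
  by (simp add: cmat_def vec_eq_iff matrix_vector_mult_def sum_distrib_left algebra_simps)
lemma transpose_cmat: "transpose (cmat c M) = cmat c (transpose M)"
  by (simp add: cmat_def vec_eq_iff transpose_def)
lemma cmat_entry[simp]: "cmat c M $ i $ j = c * M $ i $ j"
  by (simp add: cmat_def)

lemma matrix_diff_ldistrib: "(A::'a::ring_1^'n^'m) ** (B - C) = A ** B - A ** C"
  by (simp add: matrix_matrix_mult_def vec_eq_iff sum_subtractf algebra_simps)
lemma matrix_diff_rdistrib: "((A::'a::ring_1^'n^'m) - B) ** C = A ** C - B ** C"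
  by (simp add: matrix_matrix_mult_def vec_eq_iff sum_subtractf algebra_simps)
lemma matrix_uminus_left: "(- (A::'a::ring_1^'n^'m)) ** C = - (A ** C)"
  by (simp add: matrix_matrix_mult_def vec_eq_iff sum_negf algebra_simps)
lemma matrix_uminus_right: "(A::'a::ring_1^'n^'m) ** (- C) = - (A ** C)"
  by (simp add: matrix_matrix_mult_def vec_eq_iff sum_negf algebra_simps)
lemma matrix_add_rdistrib': "((A::'a::ring_1^'n^'m) + B) ** C = A ** C + B ** C"
  by (simp add: matrix_matrix_mult_def vec_eq_iff sum.distrib algebra_simps)
lemma matrix_sum_left: "(sum f S :: 'a::ring_1^'n^'m) ** C = sum (\<lambda>x. f x ** C) S"
  by (induction S rule: infinite_finite_induct) (auto simp: matrix_add_rdistrib')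
lemma matrix_sum_right: "(C :: 'a::ring_1^'n^'m) ** sum f S = sum (\<lambda>x. C ** f x) S"
  by (induction S rule: infinite_finite_induct) (auto simp: matrix_add_ldistrib)

lemma outer_mult_left: "outer a b ** M = outer a (transpose M *v b)"
  by (simp add: outer_def vec_eq_iff matrix_matrix_mult_def matrix_vector_mult_def transpose_def
      sum_distrib_left algebra_simps)
lemma mult_outer: "M ** outer a b = outer (M *v a) b"
  by (simp add: outer_def vec_eq_iff matrix_matrix_mult_def matrix_vector_mult_def
      sum_distrib_left mult_ac)
lemma outer_outer: "outer a b ** outer c d = cmat (bil b c) (outer a d)"
  by (simp add: outer_def bil_def vec_eq_iff matrix_matrix_mult_def cmat_def
      sum_distrib_right sum_distrib_left algebra_simps)
lemma outer_mv: "outer a b *v c = bil b c *s a"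
  by (simp add: outer_def bil_def vec_eq_iff matrix_vector_mult_def sum_distrib_left algebra_simps)
lemma transpose_outer: "transpose (outer a b) = outer b a"
  by (simp add: outer_def vec_eq_iff transpose_def)
lemma outer_add1: "outer (a + a') b = outer a b + outer a' b"
  by (simp add: outer_def vec_eq_iff algebra_simps)
lemma outer_add2: "outer a (b + b') = outer a b + outer a b'"
  by (simp add: outer_def vec_eq_iff algebra_simps)
lemma outer_diff1: "outer (a - a') b = outer a b - outer a' b"
  by (simp add: outer_def vec_eq_iff algebra_simps)
lemma outer_diff2: "outer a (b - b') = outer a b - outer a b'"
  by (simp add: outer_def vec_eq_iff algebra_simps)
lemma outer_uminus1: "outer (- a) b = - outer a b"
  by (simp add: outer_def vec_eq_iff algebra_simps)
lemma outer_uminus2: "outer a (- b) = - outer a b"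
  by (simp add: outer_def vec_eq_iff algebra_simps)
lemma outer_smult1: "outer (c *s a) b = cmat c (outer a b)"
  by (simp add: outer_def vec_eq_iff algebra_simps)
lemma outer_smult2: "outer a (c *s b) = cmat c (outer a b)"
  by (simp add: outer_def vec_eq_iff algebra_simps)
lemma bil_sym: "bil a b = bil b a"
  by (simp add: bil_def algebra_simps)
lemma bil_mv: "bil a (M *v b) = bil (transpose M *v a) b"
  by (simp add: bil_def matrix_vector_mult_def transpose_def sum_distrib_left sum_distrib_right
      algebra_simps) (rule sum.swap)
lemma bil_add1: "bil (a + a') b = bil a b + bil a' b"
  by (simp add: bil_def sum.distrib algebra_simps)
lemma bil_add2: "bil a (b + b') = bil a b + bil a b'"
  by (simp add: bil_def sum.distrib algebra_simps)
lemma bil_diff1: "bil (a - a') b = bil a b - bil a' b"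
  by (simp add: bil_def sum_subtractf algebra_simps)
lemma bil_diff2: "bil a (b - b') = bil a b - bil a b'"
  by (simp add: bil_def sum_subtractf algebra_simps)
lemma bil_uminus1: "bil (- a) b = - bil a b"
  by (simp add: bil_def sum_negf algebra_simps)
lemma bil_uminus2: "bil a (- b) = - bil a b"
  by (simp add: bil_def sum_negf algebra_simps)
lemma bil_smult1: "bil (c *s a) b = c * bil a b"
  by (simp add: bil_def sum_distrib_left algebra_simps)
lemma bil_smult2: "bil a (c *s b) = c * bil a b"
  by (simp add: bil_def sum_distrib_left algebra_simps)
lemma mv_add: "(A + B) *v v = A *v v + B *v (v :: complex^'n)"
  by (simp add: matrix_vector_mult_def vec_eq_iff sum.distrib algebra_simps)
lemma mv_diff: "(A - B) *v v = A *v v - B *v (v :: complex^'n)"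
  by (simp add: matrix_vector_mult_def vec_eq_iff sum_subtractf algebra_simps)
lemma mv_uminus: "(- A) *v v = - (A *v (v :: complex^'n))"
  by (simp add: matrix_vector_mult_def vec_eq_iff sum_negf algebra_simps)
lemma mv_vadd: "A *v (v + w) = A *v v + A *v (w :: complex^'n)"
  by (simp add: matrix_vector_mult_def vec_eq_iff sum.distrib algebra_simps)
lemma mv_vdiff: "A *v (v - w) = A *v v - A *v (w :: complex^'n)"
  by (simp add: matrix_vector_mult_def vec_eq_iff sum_subtractf algebra_simps)
lemma mv_vuminus: "A *v (- v) = - (A *v (v :: complex^'n))"
  by (simp add: matrix_vector_mult_def vec_eq_iff sum_negf algebra_simps)
lemma mv_smult: "A *v (c *s v) = c *s (A *v (v :: complex^'n))"
  by (simp add: matrix_vector_mult_def vec_eq_iff sum_distrib_left algebra_simps)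
lemma transpose_add: "transpose (A + B) = transpose A + transpose B"
  by (simp add: transpose_def vec_eq_iff)
lemma transpose_diff: "transpose (A - B) = transpose A - transpose B"
  by (simp add: transpose_def vec_eq_iff)
lemma transpose_uminus: "transpose (- A) = - transpose A"
  by (simp add: transpose_def vec_eq_iff)
lemma transpose_zero[simp]: "transpose 0 = 0"
  by (simp add: transpose_def vec_eq_iff)


definition manal :: "(complex \<Rightarrow> 'n::finite mat) \<Rightarrow> bool" where
  "manal H \<longleftrightarrow> (\<forall>i j. (\<lambda>\<zeta>. H \<zeta> $ i $ j) analytic_on {0})"

lemma manal_const[simp]: "manal (\<lambda>_. C)"
  by (simp add: manal_def)
lemma manal_add: "manal F \<Longrightarrow> manal G \<Longrightarrow> manal (\<lambda>z. F z + G z)"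
  by (auto simp: manal_def intro!: analytic_intros)
lemma manal_diff: "manal F \<Longrightarrow> manal G \<Longrightarrow> manal (\<lambda>z. F z - G z)"
  by (auto simp: manal_def intro!: analytic_intros)
lemma manal_uminus: "manal F \<Longrightarrow> manal (\<lambda>z. - F z)"
  by (auto simp: manal_def intro!: analytic_intros)
lemma manal_mult: "manal F \<Longrightarrow> manal G \<Longrightarrow> manal (\<lambda>z. F z ** G z)"
  by (auto simp: manal_def matrix_matrix_mult_def intro!: analytic_intros)
lemma manal_cmat: "f analytic_on {0} \<Longrightarrow> manal G \<Longrightarrow> manal (\<lambda>z. cmat (f z) (G z))"
  by (auto simp: manal_def intro!: analytic_intros)
lemma manal_transpose: "manal F \<Longrightarrow> manal (\<lambda>z. transpose (F z))"
  by (auto simp: manal_def transpose_def)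
lemma manal_sum: "(\<And>x. x \<in> S \<Longrightarrow> manal (F x)) \<Longrightarrow> manal (\<lambda>z. \<Sum>x\<in>S. F x z)"
  by (induction S rule: infinite_finite_induct) (auto intro: manal_add)

lemma ord0_ge_iff:
  "ord0_ge F m \<longleftrightarrow> (\<exists>H. manal H \<and> eventually (\<lambda>\<zeta>. F \<zeta> = cmat (\<zeta> powi m) (H \<zeta>)) (at 0))"
proof
  assume "ord0_ge F m"
  then obtain h where h: "\<And>i j. h i j analytic_on {0} \<and> (\<forall>\<^sub>F \<zeta> in at 0. F \<zeta> $ i $ j = \<zeta> powi m * h i j \<zeta>)"
    unfolding ord0_ge_def by metis
  define H where "H = (\<lambda>\<zeta>. \<chi> i j. h i j \<zeta>)"
  have "manal H" using h by (simp add: manal_def H_def)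
  moreover have "eventually (\<lambda>\<zeta>. \<forall>i j. F \<zeta> $ i $ j = \<zeta> powi m * h i j \<zeta>) (at 0)"
    by (intro eventually_all_finite) (use h in auto)
  then have "eventually (\<lambda>\<zeta>. F \<zeta> = cmat (\<zeta> powi m) (H \<zeta>)) (at 0)"
    by eventually_elim (simp add: vec_eq_iff H_def)
  ultimately show "\<exists>H. manal H \<and> eventually (\<lambda>\<zeta>. F \<zeta> = cmat (\<zeta> powi m) (H \<zeta>)) (at 0)" by blast
next
  assume "\<exists>H. manal H \<and> eventually (\<lambda>\<zeta>. F \<zeta> = cmat (\<zeta> powi m) (H \<zeta>)) (at 0)"
  then obtain H where H: "manal H" "eventually (\<lambda>\<zeta>. F \<zeta> = cmat (\<zeta> powi m) (H \<zeta>)) (at 0)" by blast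
  show "ord0_ge F m" unfolding ord0_ge_def
  proof (intro allI exI conjI)
    fix i j
    show "(\<lambda>\<zeta>. H \<zeta> $ i $ j) analytic_on {0}" using H(1) by (simp add: manal_def)
    show "\<forall>\<^sub>F \<zeta> in at 0. F \<zeta> $ i $ j = \<zeta> powi m * H \<zeta> $ i $ j"
      using H(2) by eventually_elim simp
  qed
qed

lemma ord0_geI: "manal H \<Longrightarrow> eventually (\<lambda>\<zeta>. F \<zeta> = cmat (\<zeta> powi m) (H \<zeta>)) (at 0) \<Longrightarrow> ord0_ge F m"
  using ord0_ge_iff by blast

lemma ord0_geE:
  assumes "ord0_ge F m"
  obtains H where "manal H" "eventually (\<lambda>\<zeta>. F \<zeta> = cmat (\<zeta> powi m) (H \<zeta>)) (at 0)"
  using assms ord0_ge_iff by blast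

lemma ord0_ge_cong:
  assumes "ord0_ge F m" "eventually (\<lambda>\<zeta>. F \<zeta> = G \<zeta>) (at 0)"
  shows "ord0_ge G m"
proof -
  obtain H where H: "manal H" "eventually (\<lambda>\<zeta>. F \<zeta> = cmat (\<zeta> powi m) (H \<zeta>)) (at 0)"
    using assms(1) by (rule ord0_geE)
  show ?thesis
    by (rule ord0_geI[OF H(1)]) (use H(2) assms(2) in \<open>eventually_elim, simp\<close>)
qed

lemma ord0_ge_zero: "ord0_ge (\<lambda>_. 0) m"
  by (rule ord0_geI[of "\<lambda>_. 0"]) auto

lemma ord0_ge_zero': "eventually (\<lambda>\<zeta>. F \<zeta> = 0) (at 0) \<Longrightarrow> ord0_ge F m"
  by (rule ord0_ge_cong[OF ord0_ge_zero]) (auto elim: eventually_mono)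

lemma ord0_ge_add:
  assumes "ord0_ge F m" "ord0_ge G m"
  shows "ord0_ge (\<lambda>\<zeta>. F \<zeta> + G \<zeta>) m"
proof -
  obtain H where H: "manal H" "eventually (\<lambda>\<zeta>. F \<zeta> = cmat (\<zeta> powi m) (H \<zeta>)) (at 0)"
    using assms(1) by (rule ord0_geE)
  obtain K where K: "manal K" "eventually (\<lambda>\<zeta>. G \<zeta> = cmat (\<zeta> powi m) (K \<zeta>)) (at 0)"
    using assms(2) by (rule ord0_geE)
  show ?thesis
    by (rule ord0_geI[OF manal_add[OF H(1) K(1)]]) (use H(2) K(2) in \<open>eventually_elim, simp add: cmat_add\<close>)
qed

lemma ord0_ge_diff:
  assumes "ord0_ge F m" "ord0_ge G m"
  shows "ord0_ge (\<lambda>\<zeta>. F \<zeta> - G \<zeta>) m"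
proof -
  obtain H where H: "manal H" "eventually (\<lambda>\<zeta>. F \<zeta> = cmat (\<zeta> powi m) (H \<zeta>)) (at 0)"
    using assms(1) by (rule ord0_geE)
  obtain K where K: "manal K" "eventually (\<lambda>\<zeta>. G \<zeta> = cmat (\<zeta> powi m) (K \<zeta>)) (at 0)"
    using assms(2) by (rule ord0_geE)
  show ?thesis
    by (rule ord0_geI[OF manal_diff[OF H(1) K(1)]]) (use H(2) K(2) in \<open>eventually_elim, simp add: cmat_diff\<close>)
qed

lemma ord0_ge_uminus:
  assumes "ord0_ge F m"
  shows "ord0_ge (\<lambda>\<zeta>. - F \<zeta>) m"
  using ord0_ge_diff[OF ord0_ge_zero assms] by simp

lemma ord0_ge_sum:
  assumes "\<And>x. x \<in> S \<Longrightarrow> ord0_ge (F x) m"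
  shows "ord0_ge (\<lambda>\<zeta>. \<Sum>x\<in>S. F x \<zeta>) m"
  using assms
proof (induction S rule: infinite_finite_induct)
  case (insert x S)
  then show ?case by (auto intro!: ord0_ge_add)
qed (auto intro: ord0_ge_zero)

lemma ord0_ge_mono:
  assumes "ord0_ge F m" "k \<le> m"
  shows "ord0_ge F k"
proof -
  obtain H where H: "manal H" "eventually (\<lambda>\<zeta>. F \<zeta> = cmat (\<zeta> powi m) (H \<zeta>)) (at 0)"
    using assms(1) by (rule ord0_geE)
  have man: "manal (\<lambda>\<zeta>. cmat (\<zeta> ^ nat (m - k)) (H \<zeta>))"
    by (intro manal_cmat H(1) analytic_intros)
  have nz: "eventually (\<lambda>\<zeta>. \<zeta> \<noteq> 0) (at (0::complex))"
    by (simp add: eventually_at_filter)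
  have "eventually (\<lambda>\<zeta>. F \<zeta> = cmat (\<zeta> powi k) (cmat (\<zeta> ^ nat (m - k)) (H \<zeta>))) (at 0)"
    using nz H(2)
  proof eventually_elim
    case (elim \<zeta>)
    have "\<zeta> powi m = \<zeta> powi (k + (m - k))" by simp
    also have "\<dots> = \<zeta> powi k * \<zeta> powi (m - k)" by (rule power_int_add) (simp add: elim(1))
    also have "\<zeta> powi (m - k) = \<zeta> ^ nat (m - k)" using assms(2) by (simp add: power_int_def)
    finally show ?case using elim by simp
  qed
  then show ?thesis by (rule ord0_geI[OF man])
qed

lemma ord0_ge_mult:
  assumes "ord0_ge F m" "ord0_ge G k"
  shows "ord0_ge (\<lambda>\<zeta>. F \<zeta> ** G \<zeta>) (m + k)"
proof -
  obtain H where H: "manal H" "eventually (\<lambda>\<zeta>. F \<zeta> = cmat (\<zeta> powi m) (H \<zeta>)) (at 0)"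
    using assms(1) by (rule ord0_geE)
  obtain K where K: "manal K" "eventually (\<lambda>\<zeta>. G \<zeta> = cmat (\<zeta> powi k) (K \<zeta>)) (at 0)"
    using assms(2) by (rule ord0_geE)
  have nz: "eventually (\<lambda>\<zeta>. \<zeta> \<noteq> 0) (at (0::complex))"
    by (simp add: eventually_at_filter)
  show ?thesis
    by (rule ord0_geI[OF manal_mult[OF H(1) K(1)]])
       (use H(2) K(2) nz in \<open>eventually_elim, simp add: power_int_add mult.commute\<close>)
qed

lemma ord0_ge_cmat_const:
  assumes "ord0_ge F m" shows "ord0_ge (\<lambda>\<zeta>. cmat c (F \<zeta>)) m"
proof -
  obtain H where H: "manal H" "eventually (\<lambda>\<zeta>. F \<zeta> = cmat (\<zeta> powi m) (H \<zeta>)) (at 0)"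
    using assms(1) by (rule ord0_geE)
  have "manal (\<lambda>\<zeta>. cmat c (H \<zeta>))" by (rule manal_cmat[OF _ H(1)]) simp
  moreover have "eventually (\<lambda>\<zeta>. cmat c (F \<zeta>) = cmat (\<zeta> powi m) (cmat c (H \<zeta>))) (at 0)"
    using H(2) by eventually_elim (simp add: mult.commute)
  ultimately show ?thesis by (rule ord0_geI)
qed

lemma ord0_ge_const: "ord0_ge (\<lambda>_. A) 0"
  by (rule ord0_geI[of "\<lambda>_. A"]) auto

lemma ord0_ge_mult_const_left: "ord0_ge F m \<Longrightarrow> ord0_ge (\<lambda>\<zeta>. A ** F \<zeta>) m"
  using ord0_ge_mult[OF ord0_ge_const, of F m A] by simp

lemma ord0_ge_mult_const_right: "ord0_ge F m \<Longrightarrow> ord0_ge (\<lambda>\<zeta>. F \<zeta> ** A) m"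
  using ord0_ge_mult[OF _ ord0_ge_const, of F m A] by simp

lemma ord0_ge_monom: "ord0_ge (\<lambda>\<zeta>. cmat (\<zeta> powi m) C) m"
  by (rule ord0_geI[of "\<lambda>_. C"]) auto

lemma ord0_ge_monom': "k \<le> m \<Longrightarrow> ord0_ge (\<lambda>\<zeta>. cmat (\<zeta> powi m) C) k"
  by (rule ord0_ge_mono[OF ord0_ge_monom])

lemma analytic_split0:
  assumes "(h :: complex \<Rightarrow> complex) analytic_on {0}"
  shows "\<exists>g. g analytic_on {0} \<and> eventually (\<lambda>\<zeta>. h \<zeta> = h 0 + \<zeta> * g \<zeta>) (at 0)"
proof -
  obtain e where e: "e > 0" "h holomorphic_on ball 0 e"
    using assms unfolding analytic_on_def by auto
  define g where "g = (\<lambda>z. if z = 0 then deriv h 0 else (h z - h 0) / (z - 0))"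
  have "g holomorphic_on ball 0 e"
    unfolding g_def by (rule pole_lemma_open[OF e(2)]) simp
  then have "g analytic_on ball 0 e" by (simp add: analytic_on_open)
  then have "g analytic_on {0}" by (rule analytic_on_subset) (use e in auto)
  moreover have "eventually (\<lambda>\<zeta>. h \<zeta> = h 0 + \<zeta> * g \<zeta>) (at 0)"
    by (simp add: eventually_at_filter g_def)
  ultimately show ?thesis by blast
qed

lemma ord0_ge_next:
  assumes "ord0_ge F m"
  shows "\<exists>C. ord0_ge (\<lambda>\<zeta>. F \<zeta> - cmat (\<zeta> powi m) C) (m + 1)"
proof -
  obtain H where H: "manal H" "eventually (\<lambda>\<zeta>. F \<zeta> = cmat (\<zeta> powi m) (H \<zeta>)) (at 0)"
    using assms(1) by (rule ord0_geE)
  have "\<forall>i j. \<exists>g. g analytic_on {0} \<and> eventually (\<lambda>\<zeta>. H \<zeta> $ i $ j = H 0 $ i $ j + \<zeta> * g \<zeta>) (at (0::complex))"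
    using H(1) analytic_split0 unfolding manal_def by blast
  then obtain g where g: "\<forall>i j. g i j analytic_on {0} \<and> eventually (\<lambda>\<zeta>. H \<zeta> $ i $ j = H 0 $ i $ j + \<zeta> * g i j \<zeta>) (at (0::complex))"
    by (auto simp: choice_iff)
  define G where "G = (\<lambda>\<zeta>. \<chi> i j. g i j \<zeta>)"
  have "manal G" using g by (simp add: manal_def G_def)
  moreover have ev: "eventually (\<lambda>\<zeta>. \<forall>i j. H \<zeta> $ i $ j = H 0 $ i $ j + \<zeta> * g i j \<zeta>) (at 0)"
    by (intro eventually_all_finite) (use g in auto)
  have nz: "eventually (\<lambda>\<zeta>. \<zeta> \<noteq> 0) (at (0::complex))"
    by (simp add: eventually_at_filter)
  have "eventually (\<lambda>\<zeta>. F \<zeta> - cmat (\<zeta> powi m) (H 0) = cmat (\<zeta> powi (m + 1)) (G \<zeta>)) (at 0)"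
    using ev H(2) nz
  proof eventually_elim
    case (elim \<zeta>)
    have "\<zeta> powi (m + 1) = \<zeta> powi m * \<zeta>" using elim by (simp add: power_int_add)
    then show ?case using elim by (simp add: vec_eq_iff G_def algebra_simps)
  qed
  ultimately show ?thesis by (blast intro: ord0_geI)
qed


lemma ord0_ge_lin_zero:
  fixes lin :: "'n::finite mat \<Rightarrow> 'n mat"
  assumes lin_diff: "\<And>A B. lin (A - B) = lin A - lin B"
    and lin_cmat: "\<And>c A. lin (cmat c A) = cmat c (lin A)"
    and lin_manal: "\<And>H. manal H \<Longrightarrow> manal (\<lambda>\<zeta>. lin (H \<zeta>))"
    and R: "ord0_ge (\<lambda>\<zeta>. R \<zeta> - cmat (\<zeta> powi m) C) (m + 1)"
    and ev: "eventually (\<lambda>\<zeta>. lin (R \<zeta>) = 0) (at 0)"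
  shows "lin C = 0"
proof -
  obtain H where H: "manal H" "eventually (\<lambda>\<zeta>. R \<zeta> - cmat (\<zeta> powi m) C = cmat (\<zeta> powi (m + 1)) (H \<zeta>)) (at 0)"
    using R by (rule ord0_geE)
  have lin0: "lin 0 = 0" using lin_diff[of 0 0] by simp
  have K: "manal (\<lambda>\<zeta>. lin (H \<zeta>))" by (rule lin_manal[OF H(1)])
  have nz: "eventually (\<lambda>\<zeta>. \<zeta> \<noteq> 0) (at (0::complex))"
    by (simp add: eventually_at_filter)
  have ev2: "eventually (\<lambda>\<zeta>. lin C = - cmat \<zeta> (lin (H \<zeta>))) (at 0)"
    using H(2) ev nz
  proof eventually_elim
    case (elim \<zeta>)
    have "lin (R \<zeta> - cmat (\<zeta> powi m) C) = lin (cmat (\<zeta> powi (m + 1)) (H \<zeta>))"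
      using elim(1) by simp
    then have "lin (R \<zeta>) - cmat (\<zeta> powi m) (lin C) = cmat (\<zeta> powi m * \<zeta>) (lin (H \<zeta>))"
    proof -
      have pm: "\<zeta> powi (m+1) = \<zeta> powi m * \<zeta>" by (simp add: power_int_add elim(3))
      show ?thesis using \<open>lin (R \<zeta> - cmat (\<zeta> powi m) C) = lin (cmat (\<zeta> powi (m + 1)) (H \<zeta>))\<close>
        by (simp only: lin_diff lin_cmat pm)
    qed
    then have "- cmat (\<zeta> powi m) (lin C) = cmat (\<zeta> powi m * \<zeta>) (lin (H \<zeta>))"
      using elim(2) by simp
    then have "cmat (inverse (\<zeta> powi m)) (- cmat (\<zeta> powi m) (lin C))
        = cmat (inverse (\<zeta> powi m)) (cmat (\<zeta> powi m * \<zeta>) (lin (H \<zeta>)))" by simp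
    moreover have "inverse (\<zeta> powi m) * (\<zeta> powi m * \<zeta>) = \<zeta>"
      using elim(3) by (simp add: power_int_eq_0_iff field_simps)
    moreover have "inverse (\<zeta> powi m) * \<zeta> powi m = 1"
      using elim(3) by (simp add: power_int_eq_0_iff field_simps)
    ultimately have "- lin C = cmat \<zeta> (lin (H \<zeta>))" by (simp only: cmat_uminus cmat_cmat cmat_one)
    then show ?case by (metis minus_minus)
  qed
  show ?thesis
  proof (rule vec_eq_iff[THEN iffD2], intro allI, rule vec_eq_iff[THEN iffD2], intro allI)
    fix i j
    have "(\<lambda>\<zeta>. lin (H \<zeta>) $ i $ j) analytic_on {0}" using K by (simp add: manal_def)
    then have "isCont (\<lambda>\<zeta>. lin (H \<zeta>) $ i $ j) 0" by (rule analytic_at_imp_isCont)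
    then have c: "((\<lambda>\<zeta>. lin (H \<zeta>) $ i $ j) \<longlongrightarrow> lin (H 0) $ i $ j) (at 0)"
      by (simp add: isCont_def)
    have "((\<lambda>\<zeta>. - (\<zeta> * lin (H \<zeta>) $ i $ j)) \<longlongrightarrow> - (0 * lin (H 0) $ i $ j)) (at 0)"
      by (rule tendsto_minus[OF tendsto_mult[OF tendsto_ident_at c]])
    then have t: "((\<lambda>\<zeta>. - (\<zeta> * lin (H \<zeta>) $ i $ j)) \<longlongrightarrow> 0) (at 0)" by simp
    have ev3: "eventually (\<lambda>\<zeta>. - (\<zeta> * lin (H \<zeta>) $ i $ j) = lin C $ i $ j) (at 0)"
      using ev2 by eventually_elim (simp only: vector_uminus_component cmat_entry)
    have "((\<lambda>\<zeta>. lin C $ i $ j) \<longlongrightarrow> 0) (at (0::complex))"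
      using tendsto_cong[OF ev3] t by simp
    from LIM_unique[OF this tendsto_const] show "lin C $ i $ j = 0 $ i $ j"
      by simp
  qed
qed


definition lpoly :: "int \<Rightarrow> nat \<Rightarrow> (nat \<Rightarrow> 'n::finite mat) \<Rightarrow> complex \<Rightarrow> 'n mat" where
  "lpoly a n C \<zeta> = (\<Sum>j<n. cmat (\<zeta> powi (a + int j)) (C j))"

definition expands :: "(complex \<Rightarrow> 'n::finite mat) \<Rightarrow> int \<Rightarrow> nat \<Rightarrow> (nat \<Rightarrow> 'n mat) \<Rightarrow> bool" where
  "expands F a n C \<longleftrightarrow> ord0_ge (\<lambda>\<zeta>. F \<zeta> - lpoly a n C \<zeta>) (a + int n)"

definition conv :: "(nat \<Rightarrow> 'n::finite mat) \<Rightarrow> (nat \<Rightarrow> 'n mat) \<Rightarrow> nat \<Rightarrow> 'n mat" where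
  "conv C D l = (\<Sum>i\<le>l. C i ** D (l - i))"

lemma lpoly_cong: "(\<And>j. j < n \<Longrightarrow> C j = D j) \<Longrightarrow> lpoly a n C = lpoly a n D"
  unfolding lpoly_def by (intro ext sum.cong) auto

lemma expands_cong: "(\<And>j. j < n \<Longrightarrow> C j = D j) \<Longrightarrow> expands F a n C \<Longrightarrow> expands F a n D"
  unfolding expands_def using lpoly_cong[of n C D a] by simp

lemma lpoly_ord: "ord0_ge (lpoly a n C) a"
  unfolding lpoly_def by (intro ord0_ge_sum ord0_ge_monom') auto

lemma expands_next:
  assumes "expands F a n C"
  shows "\<exists>c. expands F a (Suc n) (C(n := c))"
proof -
  obtain c where c: "ord0_ge (\<lambda>\<zeta>. F \<zeta> - lpoly a n C \<zeta> - cmat (\<zeta> powi (a + int n)) c) (a + int n + 1)"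
    using ord0_ge_next[OF assms[unfolded expands_def]] by blast
  have "lpoly a (Suc n) (C(n := c)) \<zeta> = lpoly a n C \<zeta> + cmat (\<zeta> powi (a + int n)) c" for \<zeta>
  proof -
    have "lpoly a n (C(n := c)) \<zeta> = lpoly a n C \<zeta>" by (rule fun_cong[OF lpoly_cong]) auto
    then show ?thesis by (simp add: lpoly_def)
  qed
  then have "expands F a (Suc n) (C(n := c))"
    using c by (simp add: expands_def algebra_simps)
  then show ?thesis by blast
qed

lemma lpoly_diff: "lpoly a n C \<zeta> - lpoly a n D \<zeta> = lpoly a n (\<lambda>j. C j - D j) \<zeta>"
  by (simp add: lpoly_def cmat_diff sum_subtractf)

lemma expands_diff:
  assumes "expands F a n C" "expands G a n D"
  shows "expands (\<lambda>\<zeta>. F \<zeta> - G \<zeta>) a n (\<lambda>j. C j - D j)"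
proof -
  have "ord0_ge (\<lambda>\<zeta>. (F \<zeta> - lpoly a n C \<zeta>) - (G \<zeta> - lpoly a n D \<zeta>)) (a + int n)"
    using assms unfolding expands_def by (rule ord0_ge_diff)
  then show ?thesis unfolding expands_def
    by (rule ord0_ge_cong) (simp add: lpoly_diff[symmetric] algebra_simps)
qed

lemma lpoly_mult_split:
  assumes "\<zeta> \<noteq> 0"
  shows "lpoly a n C \<zeta> ** lpoly b n D \<zeta> =
    lpoly (a + b) n (conv C D) \<zeta> +
    (\<Sum>(i,j)\<in>({..<n} \<times> {..<n}) - {(i,j). i + j < n}. cmat (\<zeta> powi (a + b + int (i + j))) (C i ** D j))"
proof -
  let ?f = "\<lambda>(i,j). cmat (\<zeta> powi (a + b + int (i + j))) (C i ** D j)"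
  have pw: "\<zeta> powi (a + int i) * \<zeta> powi (b + int j) = \<zeta> powi (a + b + int (i + j))" for i j
    using assms by (simp add: power_int_add[symmetric] algebra_simps)
  have pw2: "\<zeta> powi (b + int j) * \<zeta> powi (a + int i) = \<zeta> powi (a + b + (int i + int j))" for i j
    using assms by (simp add: power_int_add[symmetric] algebra_simps)
  have "lpoly a n C \<zeta> ** lpoly b n D \<zeta> = (\<Sum>i<n. cmat (\<zeta> powi (a + int i)) (C i) ** lpoly b n D \<zeta>)"
    by (simp only: lpoly_def[of a] matrix_sum_left)
  also have "\<dots> = (\<Sum>i<n. \<Sum>j<n. cmat (\<zeta> powi (a + int i)) (C i) ** cmat (\<zeta> powi (b + int j)) (D j))"
    by (simp only: lpoly_def[of b] matrix_sum_right)
  also have "\<dots> = (\<Sum>(i,j)\<in>{..<n} \<times> {..<n}. ?f (i,j))"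
    by (simp add: sum.cartesian_product pw pw2)
  also have "\<dots> = sum ?f {(i,j). i + j < n} + sum ?f (({..<n} \<times> {..<n}) - {(i,j). i + j < n})"
  proof -
    have sub: "{(i,j). i + j < n} \<subseteq> {..<n} \<times> {..<n}" by auto
    show ?thesis by (subst sum.subset_diff[OF sub]) (auto simp: add.commute)
  qed
  also have "sum ?f {(i,j). i + j < n} = lpoly (a + b) n (conv C D) \<zeta>"
    by (subst sum.triangle_reindex) (simp add: lpoly_def conv_def cmat_sum)
  finally show ?thesis by simp
qed

lemma expands_mult:
  assumes F: "expands F a n C" and G: "expands G b n D"
  shows "expands (\<lambda>\<zeta>. F \<zeta> ** G \<zeta>) (a + b) n (conv C D)"
proof -
  let ?P = "lpoly a n C" and ?Q = "lpoly b n D"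
  let ?S = "\<lambda>\<zeta>. (\<Sum>(i,j)\<in>({..<n} \<times> {..<n}) - {(i,j). i + j < n}. cmat (\<zeta> powi (a + b + int (i + j))) (C i ** D j))"
  have R: "ord0_ge (\<lambda>\<zeta>. F \<zeta> - ?P \<zeta>) (a + int n)" using F by (simp add: expands_def)
  have R': "ord0_ge (\<lambda>\<zeta>. G \<zeta> - ?Q \<zeta>) (b + int n)" using G by (simp add: expands_def)
  have S: "ord0_ge ?S (a + b + int n)"
    by (intro ord0_ge_sum) (auto intro!: ord0_ge_monom')
  have t1: "ord0_ge (\<lambda>\<zeta>. ?P \<zeta> ** (G \<zeta> - ?Q \<zeta>)) (a + b + int n)"
    using ord0_ge_mult[OF lpoly_ord R'] by (simp add: add.assoc)
  have t2: "ord0_ge (\<lambda>\<zeta>. (F \<zeta> - ?P \<zeta>) ** ?Q \<zeta>) (a + b + int n)"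
    using ord0_ge_mult[OF R lpoly_ord[of b n D]] by (simp add: algebra_simps)
  have t3: "ord0_ge (\<lambda>\<zeta>. (F \<zeta> - ?P \<zeta>) ** (G \<zeta> - ?Q \<zeta>)) (a + b + int n)"
    by (rule ord0_ge_mono[OF ord0_ge_mult[OF R R']]) simp
  have all: "ord0_ge (\<lambda>\<zeta>. ?S \<zeta> + ?P \<zeta> ** (G \<zeta> - ?Q \<zeta>) + (F \<zeta> - ?P \<zeta>) ** ?Q \<zeta> + (F \<zeta> - ?P \<zeta>) ** (G \<zeta> - ?Q \<zeta>)) (a + b + int n)"
    by (intro ord0_ge_add S t1 t2 t3)
  have nz: "eventually (\<lambda>\<zeta>. \<zeta> \<noteq> 0) (at (0::complex))"
    by (simp add: eventually_at_filter)
  show ?thesis unfolding expands_def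
  proof (rule ord0_ge_cong[OF all])
    show "\<forall>\<^sub>F \<zeta> in at 0. ?S \<zeta> + ?P \<zeta> ** (G \<zeta> - ?Q \<zeta>) + (F \<zeta> - ?P \<zeta>) ** ?Q \<zeta> + (F \<zeta> - ?P \<zeta>) ** (G \<zeta> - ?Q \<zeta>)
        = F \<zeta> ** G \<zeta> - lpoly (a + b) n (conv C D) \<zeta>"
      using nz
    proof eventually_elim
      case (elim \<zeta>)
      show ?case
        by (simp add: lpoly_mult_split[OF elim] matrix_diff_ldistrib matrix_diff_rdistrib algebra_simps)
    qed
  qed
qed

lemma expands_comm:
  assumes F: "expands F a n C" and G: "expands G b n D"
  shows "expands (\<lambda>\<zeta>. comm (F \<zeta>) (G \<zeta>)) (a + b) n (\<lambda>l. conv C D l - conv D C l)"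
proof -
  have "expands (\<lambda>\<zeta>. G \<zeta> ** F \<zeta>) (a + b) n (conv D C)"
    using expands_mult[OF G F] by (simp add: add.commute)
  from expands_diff[OF expands_mult[OF F G] this] show ?thesis by (simp add: comm_def)
qed


lemma comm_cmat_left: "comm (cmat c X) Y = cmat c (comm X Y)"
  by (simp add: comm_def cmat_diff)
lemma comm_cmat_right: "comm X (cmat c Y) = cmat c (comm X Y)"
  by (simp add: comm_def cmat_diff)
lemma comm_swap: "comm X Y = - comm Y X"
  by (simp add: comm_def)
lemma comm_self[simp]: "comm X X = 0"
  by (simp add: comm_def)

lemma conv_comm: "conv C D l - conv D C l = (\<Sum>i\<le>l. comm (C i) (D (l - i)))"
proof -
  have "conv D C l = (\<Sum>i\<le>l. D (l - i) ** C i)"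
    unfolding conv_def
    by (rule sum.reindex_bij_witness[where i="\<lambda>i. l - i" and j="\<lambda>i. l - i"]) auto
  then show ?thesis by (simp add: conv_def comm_def sum_subtractf)
qed

lemma mv_mult: "(A ** B) *v v = A *v (B *v (v::complex^'n::finite))"
  by (simp add: matrix_vector_mul_assoc)

lemma bil_zero1[simp]: "bil 0 b = 0" and bil_zero2[simp]: "bil a 0 = 0"
  by (simp_all add: bil_def)

lemma bil_skew:
  assumes "transpose M = - M"
  shows "bil a (M *v a) = 0"
proof -
  have "bil a (M *v a) = bil (transpose M *v a) a" by (rule bil_mv)
  also have "\<dots> = - bil (M *v a) a" using assms by (simp add: mv_uminus bil_uminus1)
  also have "\<dots> = - bil a (M *v a)" by (simp add: bil_sym)
  finally show ?thesis by simp
qed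

lemma bil_mv': "bil (M *v b) a = bil b (transpose M *v a)"
  by (metis bil_mv bil_sym transpose_transpose)

lemma bil_vm: "bil (x v* M) a = bil x (M *v a)"
  using bil_mv[of x M a] by simp

lemma gl_alg:
  fixes \<alpha> \<beta> \<beta>' :: "complex^'n::finite"
  assumes b: "bil \<beta> \<alpha> = 0" and b': "bil \<beta>' \<alpha> = 0"
    and B: "B *v \<alpha> = \<kappa> *s \<alpha>" and B': "B' *v \<alpha> = \<kappa>' *s \<alpha>"
  defines "\<gamma> \<equiv> transpose B' *v \<beta> + \<kappa> *s \<beta>' - transpose B *v \<beta>' - \<kappa>' *s \<beta>"
  shows "comm (outer \<alpha> \<beta>) (outer \<alpha> \<beta>') = 0"
    and "comm (outer \<alpha> \<beta>) B' + comm B (outer \<alpha> \<beta>') = outer \<alpha> \<gamma>"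
    and "bil \<gamma> \<alpha> = 0"
    and "(comm (outer \<alpha> \<beta>) Y2 + comm B B' + comm X2 (outer \<alpha> \<beta>')) *v \<alpha>
          = (bil \<beta> (Y2 *v \<alpha>) + \<kappa> * \<kappa>' - bil \<beta>' (X2 *v \<alpha>) - \<kappa>' * \<kappa>) *s \<alpha>"
proof -
  show "comm (outer \<alpha> \<beta>) (outer \<alpha> \<beta>') = 0"
    using b b' by (simp add: comm_def outer_outer)
  show "comm (outer \<alpha> \<beta>) B' + comm B (outer \<alpha> \<beta>') = outer \<alpha> \<gamma>"
    by (simp add: comm_def outer_mult_left mult_outer B B' outer_smult1 outer_smult2 \<gamma>_def
        outer_add2 outer_diff2)
  show "bil \<gamma> \<alpha> = 0"
    by (simp add: \<gamma>_def bil_add1 bil_diff1 bil_smult1 bil_vm B B' bil_smult2 b b')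
  show "(comm (outer \<alpha> \<beta>) Y2 + comm B B' + comm X2 (outer \<alpha> \<beta>')) *v \<alpha>
          = (bil \<beta> (Y2 *v \<alpha>) + \<kappa> * \<kappa>' - bil \<beta>' (X2 *v \<alpha>) - \<kappa>' * \<kappa>) *s \<alpha>"
    by (simp add: comm_def mv_add mv_diff mv_mult outer_mv b b' B B' mv_smult
        vector_sadd_rdistrib vector_sub_rdistrib algebra_simps)
qed

lemma so_alg:
  fixes \<alpha> \<beta> \<beta>' :: "complex^'n::finite"
  assumes aa: "bil \<alpha> \<alpha> = 0" and b: "bil \<beta> \<alpha> = 0" and b': "bil \<beta>' \<alpha> = 0"
    and B: "B *v \<alpha> = \<kappa> *s \<alpha>" and B': "B' *v \<alpha> = \<kappa>' *s \<alpha>"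
    and Bt: "transpose B = - B" and Bt': "transpose B' = - B'"
    and X2: "transpose X2 = - X2" and Y2: "transpose Y2 = - Y2"
  defines "\<gamma> \<equiv> B *v \<beta>' + \<kappa> *s \<beta>' - B' *v \<beta> - \<kappa>' *s \<beta>"
  shows "comm (outer \<alpha> \<beta> - outer \<beta> \<alpha>) (outer \<alpha> \<beta>' - outer \<beta>' \<alpha>) = 0"
    and "comm (outer \<alpha> \<beta> - outer \<beta> \<alpha>) B' + comm B (outer \<alpha> \<beta>' - outer \<beta>' \<alpha>) = outer \<alpha> \<gamma> - outer \<gamma> \<alpha>"
    and "bil \<gamma> \<alpha> = 0"
    and "(comm (outer \<alpha> \<beta> - outer \<beta> \<alpha>) Y2 + comm B B' + comm X2 (outer \<alpha> \<beta>' - outer \<beta>' \<alpha>)) *v \<alpha>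
          = (bil \<beta> (Y2 *v \<alpha>) + \<kappa> * \<kappa>' - bil \<beta>' (X2 *v \<alpha>) - \<kappa>' * \<kappa>) *s \<alpha>"
proof -
  have ab: "bil \<alpha> \<beta> = 0" "bil \<alpha> \<beta>' = 0" using b b' by (simp_all add: bil_sym)
  show "comm (outer \<alpha> \<beta> - outer \<beta> \<alpha>) (outer \<alpha> \<beta>' - outer \<beta>' \<alpha>) = 0"
    using b b' aa ab by (simp add: comm_def outer_outer matrix_diff_ldistrib matrix_diff_rdistrib bil_sym)
  show "comm (outer \<alpha> \<beta> - outer \<beta> \<alpha>) B' + comm B (outer \<alpha> \<beta>' - outer \<beta>' \<alpha>) = outer \<alpha> \<gamma> - outer \<gamma> \<alpha>"
    by (simp add: comm_def outer_mult_left mult_outer B B' Bt Bt' outer_smult1 outer_smult2 \<gamma>_def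
        outer_add2 outer_diff2 outer_add1 outer_diff1 outer_uminus1 outer_uminus2 mv_uminus
        matrix_diff_ldistrib matrix_diff_rdistrib algebra_simps)
  show "bil \<gamma> \<alpha> = 0"
    by (simp add: \<gamma>_def bil_add1 bil_diff1 bil_smult1 bil_mv' Bt Bt' mv_uminus bil_uminus2 B B' bil_smult2 b b')
  have y: "bil \<alpha> (Y2 *v \<alpha>) = 0" "bil \<alpha> (X2 *v \<alpha>) = 0" using bil_skew X2 Y2 by blast+
  show "(comm (outer \<alpha> \<beta> - outer \<beta> \<alpha>) Y2 + comm B B' + comm X2 (outer \<alpha> \<beta>' - outer \<beta>' \<alpha>)) *v \<alpha>
          = (bil \<beta> (Y2 *v \<alpha>) + \<kappa> * \<kappa>' - bil \<beta>' (X2 *v \<alpha>) - \<kappa>' * \<kappa>) *s \<alpha>"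
    by (simp add: comm_def mv_add mv_diff mv_mult outer_mv b b' aa ab y B B' mv_smult mv_vdiff
        vector_sadd_rdistrib vector_sub_rdistrib algebra_simps)
qed


definition spm :: "'n::finite mat \<Rightarrow> 'n mat \<Rightarrow> bool" where
  "spm \<sigma> X \<longleftrightarrow> transpose X ** \<sigma> + \<sigma> ** X = 0"

definition Sym :: "'n::finite mat \<Rightarrow> complex^'n \<Rightarrow> complex^'n \<Rightarrow> 'n mat" where
  "Sym \<sigma> a v = (outer a v + outer v a) ** \<sigma>"

lemma Sym_add: "Sym \<sigma> a (u + v) = Sym \<sigma> a u + Sym \<sigma> a v"
  by (simp add: Sym_def outer_add1 outer_add2 matrix_add_rdistrib' algebra_simps)
lemma Sym_diff: "Sym \<sigma> a (u - v) = Sym \<sigma> a u - Sym \<sigma> a v"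
  by (simp add: Sym_def outer_diff1 outer_diff2 matrix_diff_rdistrib algebra_simps)
lemma Sym_uminus: "Sym \<sigma> a (- u) = - Sym \<sigma> a u"
  by (simp add: Sym_def outer_uminus1 outer_uminus2 matrix_uminus_left matrix_diff_rdistrib matrix_add_rdistrib')
lemma Sym_smult: "Sym \<sigma> a (c *s u) = cmat c (Sym \<sigma> a u)"
  by (simp add: Sym_def outer_smult1 outer_smult2 cmat_add matrix_add_rdistrib')

context
  fixes \<sigma> :: "'n::finite mat" and \<alpha> :: "complex^'n"
  assumes st: "transpose \<sigma> = - \<sigma>"
begin

abbreviation om where "om x y \<equiv> bil x (\<sigma> *v y)"

lemma om_anti: "om x y = - om y x"
proof -
  have "om x y = bil (transpose \<sigma> *v x) y" by (rule bil_mv)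
  also have "\<dots> = - om y x" using st by (simp add: mv_uminus bil_uminus1 bil_uminus2 bil_sym)
  finally show ?thesis .
qed

lemma om_self: "om x x = 0"
  using om_anti[of x x] by simp

lemma spm_sym: "spm \<sigma> X \<Longrightarrow> transpose X ** \<sigma> = - (\<sigma> ** X)"
  by (simp add: spm_def eq_neg_iff_add_eq_0)

lemma om_sp: assumes "spm \<sigma> X" shows "om x (X *v y) = - om (X *v x) y"
proof -
  have "om x (X *v y) = bil x ((\<sigma> ** X) *v y)" by (simp add: mv_mult)
  also have "\<dots> = bil (transpose (\<sigma> ** X) *v x) y" by (rule bil_mv)
  also have "transpose (\<sigma> ** X) = transpose X ** transpose \<sigma>" by (rule matrix_transpose_mul)
  also have "\<dots> = - (transpose X ** \<sigma>)" using st by (simp add: matrix_uminus_right)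
  also have "\<dots> = \<sigma> ** X" using spm_sym[OF assms] by simp
  also have "bil ((\<sigma> ** X) *v x) y = om y (X *v x)" by (simp add: mv_mult bil_sym)
  also have "\<dots> = - om (X *v x) y" by (rule om_anti)
  finally show ?thesis .
qed

lemma out_sigma: "outer u v ** \<sigma> = - outer u (\<sigma> *v v)"
  using st by (simp add: outer_mult_left mv_uminus outer_uminus2)

lemma N_sp: assumes "spm \<sigma> X" shows "outer u (\<sigma> *v v) ** X = - outer u (\<sigma> *v (X *v v))"
proof -
  have "transpose X *v (\<sigma> *v v) = (transpose X ** \<sigma>) *v v" by (simp add: mv_mult)
  also have "\<dots> = - (\<sigma> *v (X *v v))" using spm_sym[OF assms] by (simp add: mv_uminus mv_mult)
  finally have "transpose X *v (\<sigma> *v v) = - (\<sigma> *v (X *v v))" .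
  then show ?thesis by (simp only: outer_mult_left outer_uminus2)
qed

lemma outer_outer_N: "outer u (\<sigma> *v v) ** outer u' w = cmat (om u' v) (outer u w)"
  by (simp add: outer_outer bil_sym)

lemma E_N: "outer \<alpha> \<alpha> ** \<sigma> = - outer \<alpha> (\<sigma> *v \<alpha>)"
  by (rule out_sigma)
lemma Sym_N: "Sym \<sigma> \<alpha> v = - (outer \<alpha> (\<sigma> *v v) + outer v (\<sigma> *v \<alpha>))"
  by (simp add: Sym_def matrix_add_rdistrib' out_sigma)

lemma comm_E_S:
  assumes "om \<beta> \<alpha> = 0"
  shows "comm (outer \<alpha> \<alpha> ** \<sigma>) (Sym \<sigma> \<alpha> \<beta>) = 0"
proof -
  have "om \<alpha> \<beta> = 0" using assms om_anti[of \<alpha> \<beta>] by simp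
  then show ?thesis using assms
    by (simp add: comm_def E_N Sym_N matrix_add_ldistrib matrix_add_rdistrib' matrix_diff_ldistrib matrix_diff_rdistrib matrix_uminus_left
        matrix_uminus_right outer_outer_N om_self)
qed

lemma comm_E_X:
  assumes "spm \<sigma> X"
  shows "comm (outer \<alpha> \<alpha> ** \<sigma>) X = - Sym \<sigma> \<alpha> (X *v \<alpha>)"
proof -
  have 1: "(outer \<alpha> \<alpha> ** \<sigma>) ** X = outer \<alpha> (\<sigma> *v (X *v \<alpha>))"
    by (simp only: E_N matrix_uminus_left N_sp[OF assms] minus_minus)
  have 2: "X ** (outer \<alpha> \<alpha> ** \<sigma>) = - outer (X *v \<alpha>) (\<sigma> *v \<alpha>)"
    by (simp only: E_N matrix_uminus_right mult_outer)
  show ?thesis by (simp only: comm_def 1 2 Sym_N minus_minus diff_minus_eq_add)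
qed

lemma comm_S_X:
  assumes "spm \<sigma> X" "X *v \<alpha> = \<kappa> *s \<alpha>"
  shows "comm (Sym \<sigma> \<alpha> \<beta>) X = - Sym \<sigma> \<alpha> (X *v \<beta> + \<kappa> *s \<beta>)"
  by (simp add: comm_def Sym_N matrix_uminus_left matrix_uminus_right matrix_add_rdistrib' matrix_add_ldistrib
      matrix_diff_ldistrib matrix_diff_rdistrib N_sp[OF assms(1)] mult_outer assms(2) outer_add1 outer_add2 outer_smult1 outer_smult2
      mv_smult algebra_simps)

lemma two_times_mat: "2 * (X::'m::finite mat) = cmat 2 X"
  by (simp add: cmat_def vec_eq_iff)

lemma comm_S_S:
  assumes "om \<beta> \<alpha> = 0" "om \<beta>' \<alpha> = 0"
  shows "comm (Sym \<sigma> \<alpha> \<beta>) (Sym \<sigma> \<alpha> \<beta>') = cmat (2 * om \<beta> \<beta>') (outer \<alpha> \<alpha> ** \<sigma>)"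
proof -
  have "om \<alpha> \<beta> = 0" "om \<alpha> \<beta>' = 0" using assms om_anti[of \<alpha> \<beta>] om_anti[of \<alpha> \<beta>'] by simp_all
  moreover have "om \<beta>' \<beta> = - om \<beta> \<beta>'" by (rule om_anti)
  ultimately show ?thesis using assms
    by (simp add: comm_def E_N Sym_N matrix_add_ldistrib matrix_add_rdistrib' matrix_diff_ldistrib matrix_diff_rdistrib matrix_uminus_left
        matrix_uminus_right outer_outer_N om_self cmat_uminus cmat_uminus_left
        two_times_mat flip: cmat_add_left)
qed

lemma cmat_two: "cmat 2 X = X + X"
  unfolding cmat_def vec_eq_iff by (simp add: ring_distribs(2)[symmetric])

lemma Sym_alpha: "Sym \<sigma> \<alpha> \<alpha> = cmat 2 (outer \<alpha> \<alpha> ** \<sigma>)"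
  by (simp only: Sym_def cmat_two matrix_add_rdistrib')


lemma vE: "(outer \<alpha> \<alpha> ** \<sigma>) *v v = om \<alpha> v *s \<alpha>"
  by (simp add: mv_mult outer_mv)
lemma vS: "Sym \<sigma> \<alpha> \<beta> *v v = om \<beta> v *s \<alpha> + om \<alpha> v *s \<beta>"
  by (simp add: Sym_def mv_mult outer_mv mv_add)

lemma sp1:
  assumes "om \<beta> \<alpha> = 0" "om \<beta>' \<alpha> = 0"
  shows "comm (cmat \<nu> (outer \<alpha> \<alpha> ** \<sigma>)) (Sym \<sigma> \<alpha> \<beta>') + comm (Sym \<sigma> \<alpha> \<beta>) (cmat \<nu>' (outer \<alpha> \<alpha> ** \<sigma>)) = 0"
proof -
  have "comm (Sym \<sigma> \<alpha> \<beta>) (outer \<alpha> \<alpha> ** \<sigma>) = 0"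
    using comm_E_S[OF assms(1)] comm_swap[of "Sym \<sigma> \<alpha> \<beta>"] by simp
  then show ?thesis
    using comm_E_S[OF assms(2)] by (simp add: comm_cmat_left comm_cmat_right)
qed

lemma sp2:
  assumes "om \<beta> \<alpha> = 0" "om \<beta>' \<alpha> = 0" "spm \<sigma> B" "spm \<sigma> B'"
    "B *v \<alpha> = \<kappa> *s \<alpha>" "B' *v \<alpha> = \<kappa>' *s \<alpha>"
  shows "comm (cmat \<nu> (outer \<alpha> \<alpha> ** \<sigma>)) B' + comm (Sym \<sigma> \<alpha> \<beta>) (Sym \<sigma> \<alpha> \<beta>') + comm B (cmat \<nu>' (outer \<alpha> \<alpha> ** \<sigma>))
     = cmat (2 * (\<nu>' * \<kappa> - \<nu> * \<kappa>' + om \<beta> \<beta>')) (outer \<alpha> \<alpha> ** \<sigma>)"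
proof -
  have 1: "comm (outer \<alpha> \<alpha> ** \<sigma>) B' = cmat (- 2 * \<kappa>') (outer \<alpha> \<alpha> ** \<sigma>)"
    using comm_E_X[OF assms(4)] assms(6) by (simp add: Sym_smult Sym_alpha cmat_uminus_left mult.commute)
  have 2: "comm B (outer \<alpha> \<alpha> ** \<sigma>) = cmat (2 * \<kappa>) (outer \<alpha> \<alpha> ** \<sigma>)"
    using comm_E_X[OF assms(3)] assms(5) comm_swap[of B] by (simp add: Sym_smult Sym_alpha mult.commute)
  show ?thesis
    by (simp add: comm_cmat_left comm_cmat_right 1 2 comm_S_S[OF assms(1,2)]
        flip: cmat_add_left cmat_diff_left) (simp add: algebra_simps)
qed

lemma sp3:
  fixes \<nu> \<nu>' :: complex
  assumes "om \<beta> \<alpha> = 0" "om \<beta>' \<alpha> = 0" "spm \<sigma> B" "spm \<sigma> B'" "spm \<sigma> C" "spm \<sigma> C'"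
    "B *v \<alpha> = \<kappa> *s \<alpha>" "B' *v \<alpha> = \<kappa>' *s \<alpha>"
    "om \<alpha> (C *v \<alpha>) = 0" "om \<alpha> (C' *v \<alpha>) = 0"
  defines "\<gamma> \<equiv> - (\<nu> *s (C' *v \<alpha>)) - (B' *v \<beta> + \<kappa>' *s \<beta>) + (B *v \<beta>' + \<kappa> *s \<beta>') + \<nu>' *s (C *v \<alpha>)"
  shows "comm (cmat \<nu> (outer \<alpha> \<alpha> ** \<sigma>)) C' + comm (Sym \<sigma> \<alpha> \<beta>) B' + comm B (Sym \<sigma> \<alpha> \<beta>')
          + comm C (cmat \<nu>' (outer \<alpha> \<alpha> ** \<sigma>)) = Sym \<sigma> \<alpha> \<gamma>"
    and "om \<gamma> \<alpha> = 0"
proof -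
  have 1: "comm B (Sym \<sigma> \<alpha> \<beta>') = Sym \<sigma> \<alpha> (B *v \<beta>' + \<kappa> *s \<beta>')"
    using comm_S_X[OF assms(3,7), of \<beta>'] comm_swap[of B] by simp
  have 2: "comm C (outer \<alpha> \<alpha> ** \<sigma>) = Sym \<sigma> \<alpha> (C *v \<alpha>)"
    using comm_E_X[OF assms(5)] comm_swap[of C] by simp
  show "comm (cmat \<nu> (outer \<alpha> \<alpha> ** \<sigma>)) C' + comm (Sym \<sigma> \<alpha> \<beta>) B' + comm B (Sym \<sigma> \<alpha> \<beta>')
          + comm C (cmat \<nu>' (outer \<alpha> \<alpha> ** \<sigma>)) = Sym \<sigma> \<alpha> \<gamma>"
    by (simp add: comm_cmat_left comm_cmat_right 1 2 comm_E_X[OF assms(6)] comm_S_X[OF assms(4,8)]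
        \<gamma>_def Sym_add Sym_diff Sym_uminus Sym_smult cmat_uminus)
  have a: "om (C' *v \<alpha>) \<alpha> = 0" "om (C *v \<alpha>) \<alpha> = 0"
    using assms(9,10) om_anti[of "C' *v \<alpha>" \<alpha>] om_anti[of "C *v \<alpha>" \<alpha>] by simp_all
  have b: "om (B' *v \<beta>) \<alpha> = 0" "om (B *v \<beta>') \<alpha> = 0"
    using om_sp[OF assms(4), of \<beta> \<alpha>] om_sp[OF assms(3), of \<beta>' \<alpha>] assms(1,2,7,8)
    by (simp_all add: mv_smult bil_smult2)
  show "om \<gamma> \<alpha> = 0"
    by (simp add: \<gamma>_def bil_add1 bil_diff1 bil_uminus1 bil_smult1 a b assms(1,2))
qed

lemma sp4:
  assumes "om \<beta> \<alpha> = 0" "om \<beta>' \<alpha> = 0"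
    "B *v \<alpha> = \<kappa> *s \<alpha>" "B' *v \<alpha> = \<kappa>' *s \<alpha>"
    "om \<alpha> (C *v \<alpha>) = 0" "om \<alpha> (C' *v \<alpha>) = 0"
  shows "(comm (cmat \<nu> (outer \<alpha> \<alpha> ** \<sigma>)) D' + comm (Sym \<sigma> \<alpha> \<beta>) C' + comm B B' + comm C (Sym \<sigma> \<alpha> \<beta>')
          + comm D (cmat \<nu>' (outer \<alpha> \<alpha> ** \<sigma>))) *v \<alpha>
     = (\<nu> * om \<alpha> (D' *v \<alpha>) + om \<beta> (C' *v \<alpha>) - om \<beta>' (C *v \<alpha>) - \<nu>' * om \<alpha> (D *v \<alpha>)) *s \<alpha>"
proof -
  have s: "Sym \<sigma> \<alpha> \<beta> *v \<alpha> = 0" "Sym \<sigma> \<alpha> \<beta>' *v \<alpha> = 0" "(outer \<alpha> \<alpha> ** \<sigma>) *v \<alpha> = 0"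
    using assms(1,2) by (simp_all add: vS vE om_self)
  show ?thesis
    by (simp add: comm_def mv_add mv_diff mv_mult s cmat_mv mv_smult vS vE assms outer_mv om_self
        vector_sadd_rdistrib vector_sub_rdistrib algebra_simps)
qed

lemma sp5:
  assumes "om \<beta> \<alpha> = 0" "om \<beta>' \<alpha> = 0" "spm \<sigma> B" "spm \<sigma> B'"
    "B *v \<alpha> = \<kappa> *s \<alpha>" "B' *v \<alpha> = \<kappa>' *s \<alpha>"
    "om \<alpha> (C *v \<alpha>) = 0" "om \<alpha> (C' *v \<alpha>) = 0"
  shows "om \<alpha> ((comm (cmat \<nu> (outer \<alpha> \<alpha> ** \<sigma>)) L' + comm (Sym \<sigma> \<alpha> \<beta>) D' + comm B C' + comm C B'
          + comm D (Sym \<sigma> \<alpha> \<beta>') + comm L (cmat \<nu>' (outer \<alpha> \<alpha> ** \<sigma>))) *v \<alpha>) = 0"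
proof -
  have s: "Sym \<sigma> \<alpha> \<beta> *v \<alpha> = 0" "Sym \<sigma> \<alpha> \<beta>' *v \<alpha> = 0" "(outer \<alpha> \<alpha> ** \<sigma>) *v \<alpha> = 0"
    using assms(1,2) by (simp_all add: vS vE om_self)
  have ab: "om \<alpha> \<beta> = 0" "om \<alpha> \<beta>' = 0"
    using assms(1,2) om_anti[of \<alpha> \<beta>] om_anti[of \<alpha> \<beta>'] by simp_all
  have c: "om \<alpha> (B *v (C' *v \<alpha>)) = 0" "om \<alpha> (B' *v (C *v \<alpha>)) = 0"
    using om_sp[OF assms(3), of \<alpha> "C' *v \<alpha>"] om_sp[OF assms(4), of \<alpha> "C *v \<alpha>"] assms(5-8)
    by (simp_all add: bil_smult1)
  have aa: "om \<alpha> \<alpha> = 0" by (rule om_self)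
  show ?thesis
    by (simp add: comm_def mv_add mv_diff mv_mult s cmat_mv mv_smult vS vE assms(1,2,5-8) c ab aa outer_mv
        bil_add2 bil_diff2 bil_smult2 mv_vadd mv_vdiff mv_vuminus bil_uminus2)
qed

end


definition tyF :: "lie_kind \<Rightarrow> 'n::finite mat \<Rightarrow> complex^'n \<Rightarrow> (complex \<Rightarrow> 'n mat) \<Rightarrow> bool" where
  "tyF kd \<sigma> \<alpha> F \<longleftrightarrow>
     (case kd of
       SP \<Rightarrow> (\<exists>\<beta> \<nu> \<kappa> L0 L1.
               bil \<beta> (\<sigma> *v \<alpha>) = 0 \<and> L0 *v \<alpha> = \<kappa> *s \<alpha> \<and> bil \<alpha> (\<sigma> *v (L1 *v \<alpha>)) = 0 \<and>
               ord0_ge (\<lambda>\<zeta>. F \<zeta> - cmat (inverse (\<zeta>^2)) (cmat \<nu> (outer \<alpha> \<alpha> ** \<sigma>))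
                            - cmat (inverse \<zeta>) ((outer \<alpha> \<beta> + outer \<beta> \<alpha>) ** \<sigma>)
                            - L0 - cmat \<zeta> L1) 2)
     | SO \<Rightarrow> (\<exists>\<beta> \<kappa> L0. bil \<beta> \<alpha> = 0 \<and> L0 *v \<alpha> = \<kappa> *s \<alpha> \<and>
               ord0_ge (\<lambda>\<zeta>. F \<zeta> - cmat (inverse \<zeta>) (outer \<alpha> \<beta> - outer \<beta> \<alpha>) - L0) 1)
     | _ \<Rightarrow> (\<exists>\<beta> \<kappa> L0. bil \<beta> \<alpha> = 0 \<and> L0 *v \<alpha> = \<kappa> *s \<alpha> \<and>
               ord0_ge (\<lambda>\<zeta>. F \<zeta> - cmat (inverse \<zeta>) (outer \<alpha> \<beta>) - L0) 1))"

lemma tyurin_tyF: "tyurin_cond kd \<sigma> c \<alpha> L = tyF kd \<sigma> \<alpha> (in_coord c L)"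
  by (simp add: tyurin_cond_def tyF_def Let_def)

lemma tyF_gl: "kd \<noteq> SO \<Longrightarrow> kd \<noteq> SP \<Longrightarrow> tyF kd \<sigma> \<alpha> F \<longleftrightarrow> (\<exists>\<beta> \<kappa> L0. bil \<beta> \<alpha> = 0 \<and> L0 *v \<alpha> = \<kappa> *s \<alpha> \<and>
               ord0_ge (\<lambda>\<zeta>. F \<zeta> - cmat (inverse \<zeta>) (outer \<alpha> \<beta>) - L0) 1)"
  by (cases kd) (auto simp: tyF_def)

lemma tyF_so: "kd = SO \<Longrightarrow> tyF kd \<sigma> \<alpha> F \<longleftrightarrow> (\<exists>\<beta> \<kappa> L0. bil \<beta> \<alpha> = 0 \<and> L0 *v \<alpha> = \<kappa> *s \<alpha> \<and>
               ord0_ge (\<lambda>\<zeta>. F \<zeta> - cmat (inverse \<zeta>) (outer \<alpha> \<beta> - outer \<beta> \<alpha>) - L0) 1)"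
  by (simp add: tyF_def)

lemma tyF_sp: "kd = SP \<Longrightarrow> tyF kd \<sigma> \<alpha> F \<longleftrightarrow> (\<exists>\<beta> \<nu> \<kappa> L0 L1.
               bil \<beta> (\<sigma> *v \<alpha>) = 0 \<and> L0 *v \<alpha> = \<kappa> *s \<alpha> \<and> bil \<alpha> (\<sigma> *v (L1 *v \<alpha>)) = 0 \<and>
               ord0_ge (\<lambda>\<zeta>. F \<zeta> - cmat (inverse (\<zeta>^2)) (cmat \<nu> (outer \<alpha> \<alpha> ** \<sigma>))
                            - cmat (inverse \<zeta>) ((outer \<alpha> \<beta> + outer \<beta> \<alpha>) ** \<sigma>)
                            - L0 - cmat \<zeta> L1) 2)"
  by (simp add: tyF_def)

lemma lpoly_0[simp]: "lpoly a 0 C \<zeta> = 0"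
  by (simp add: lpoly_def)
lemma lpoly_Suc: "lpoly a (Suc n) C \<zeta> = lpoly a n C \<zeta> + cmat (\<zeta> powi (a + int n)) (C n)"
  by (simp add: lpoly_def)

lemma expands_snoc:
  assumes "expands F a (length xs) (nth xs)"
  shows "\<exists>c. expands F a (Suc (length xs)) (nth (xs @ [c]))"
proof -
  obtain c where "expands F a (Suc (length xs)) ((nth xs)(length xs := c))"
    using expands_next[OF assms] by blast
  then have "expands F a (Suc (length xs)) (nth (xs @ [c]))"
    by (rule expands_cong[rotated]) (auto simp: nth_append less_Suc_eq)
  then show ?thesis by blast
qed

lemma expands_iff_ord: "expands F a n C \<longleftrightarrow> ord0_ge (\<lambda>\<zeta>. F \<zeta> - lpoly a n C \<zeta>) (a + int n)"
  by (simp add: expands_def)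

lemma ord0_ge_cong':
  "ord0_ge F m \<Longrightarrow> eventually (\<lambda>\<zeta>. F \<zeta> = G \<zeta>) (at 0) \<Longrightarrow> m = m' \<Longrightarrow> ord0_ge G m'"
  using ord0_ge_cong by blast

lemma tyF_comm_gl:
  assumes kd: "kd \<noteq> SO" "kd \<noteq> SP" and F: "tyF kd \<sigma> \<alpha> F" and G: "tyF kd \<sigma> \<alpha> G"
  shows "tyF kd \<sigma> \<alpha> (\<lambda>\<zeta>. comm (F \<zeta>) (G \<zeta>))"
proof -
  obtain \<beta> \<kappa> B where b: "bil \<beta> \<alpha> = 0" and B: "B *v \<alpha> = \<kappa> *s \<alpha>"
    and oF: "ord0_ge (\<lambda>\<zeta>. F \<zeta> - cmat (inverse \<zeta>) (outer \<alpha> \<beta>) - B) 1"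
    using F tyF_gl[OF kd] by blast
  obtain \<beta>' \<kappa>' B' where b': "bil \<beta>' \<alpha> = 0" and B': "B' *v \<alpha> = \<kappa>' *s \<alpha>"
    and oG: "ord0_ge (\<lambda>\<zeta>. G \<zeta> - cmat (inverse \<zeta>) (outer \<alpha> \<beta>') - B') 1"
    using G tyF_gl[OF kd] by blast
  have "expands F (-1) (length [outer \<alpha> \<beta>, B]) (nth [outer \<alpha> \<beta>, B])"
    unfolding expands_iff_ord by (rule ord0_ge_cong'[OF oF]) (simp_all add: lpoly_Suc algebra_simps)
  then obtain X2 where eF0: "expands F (-1) (Suc (length [outer \<alpha> \<beta>, B])) (nth ([outer \<alpha> \<beta>, B] @ [X2]))"
    using expands_snoc by blast
  then have eF: "expands F (-1) 3 (nth [outer \<alpha> \<beta>, B, X2])" by (simp add: numeral_eq_Suc)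
  have "expands G (-1) (length [outer \<alpha> \<beta>', B']) (nth [outer \<alpha> \<beta>', B'])"
    unfolding expands_iff_ord by (rule ord0_ge_cong'[OF oG]) (simp_all add: lpoly_Suc algebra_simps)
  then obtain Y2 where eG0: "expands G (-1) (Suc (length [outer \<alpha> \<beta>', B'])) (nth ([outer \<alpha> \<beta>', B'] @ [Y2]))"
    using expands_snoc by blast
  then have eG: "expands G (-1) 3 (nth [outer \<alpha> \<beta>', B', Y2])" by (simp add: numeral_eq_Suc)
  have ec: "expands (\<lambda>\<zeta>. comm (F \<zeta>) (G \<zeta>)) (-2) 3
      (\<lambda>l. \<Sum>i\<le>l. comm ([outer \<alpha> \<beta>, B, X2] ! i) ([outer \<alpha> \<beta>', B', Y2] ! (l - i)))"
    using expands_comm[OF eF eG] by (simp add: conv_comm)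
  note alg = gl_alg[OF b b' B B']
  let ?\<gamma> = "transpose B' *v \<beta> + \<kappa> *s \<beta>' - transpose B *v \<beta>' - \<kappa>' *s \<beta>"
  let ?L0 = "comm (outer \<alpha> \<beta>) Y2 + comm B B' + comm X2 (outer \<alpha> \<beta>')"
  have a2: "comm B (outer \<alpha> \<beta>') + comm (outer \<alpha> \<beta>) B' = outer \<alpha> ?\<gamma>"
    using alg(2) by (simp add: add.commute)
  have "ord0_ge (\<lambda>\<zeta>. comm (F \<zeta>) (G \<zeta>) - cmat (inverse \<zeta>) (outer \<alpha> ?\<gamma>) - ?L0) 1"
    using ec unfolding expands_iff_ord
    by (rule ord0_ge_cong') (simp_all add: lpoly_Suc numeral_eq_Suc atMost_Suc alg(1) a2 algebra_simps)
  moreover have "?L0 *v \<alpha> = (bil \<beta> (Y2 *v \<alpha>) + \<kappa> * \<kappa>' - bil \<beta>' (X2 *v \<alpha>) - \<kappa>' * \<kappa>) *s \<alpha>"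
    by (rule alg(4))
  ultimately show ?thesis
    using alg(3) tyF_gl[OF kd] by blast
qed


lemma expands_mono1:
  assumes "expands F a (Suc n) C" shows "expands F a n C"
proof -
  have 1: "ord0_ge (\<lambda>\<zeta>. F \<zeta> - lpoly a (Suc n) C \<zeta>) (a + int n)"
    by (rule ord0_ge_mono[OF assms[unfolded expands_iff_ord]]) simp
  have "ord0_ge (\<lambda>\<zeta>. (F \<zeta> - lpoly a (Suc n) C \<zeta>) + cmat (\<zeta> powi (a + int n)) (C n)) (a + int n)"
    by (rule ord0_ge_add[OF 1 ord0_ge_monom])
  then show ?thesis unfolding expands_iff_ord
    by (rule ord0_ge_cong) (simp add: lpoly_Suc)
qed

lemma expands_mono:
  assumes "expands F a (n + k) C" shows "expands F a n C"
  using assms by (induction k) (auto dest: expands_mono1)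

lemma expands_lin:
  fixes lin :: "'n::finite mat \<Rightarrow> 'n mat"
  assumes lin_diff: "\<And>A B. lin (A - B) = lin A - lin B"
    and lin_cmat: "\<And>c A. lin (cmat c A) = cmat c (lin A)"
    and lin_manal: "\<And>H. manal H \<Longrightarrow> manal (\<lambda>\<zeta>. lin (H \<zeta>))"
    and e: "expands F a N C" and ev: "eventually (\<lambda>\<zeta>. lin (F \<zeta>) = 0) (at 0)"
  shows "j < N \<Longrightarrow> lin (C j) = 0"
proof (induction j rule: less_induct)
  case (less j)
  have lin0: "lin 0 = 0" using lin_diff[of 0 0] by simp
  have lin_add: "lin (A + B) = lin A + lin B" for A B
    using lin_diff[of "A + B" B] by (simp add: algebra_simps)
  have lin_sum: "lin (sum f S) = sum (\<lambda>x. lin (f x)) S" for f :: "nat \<Rightarrow> 'n mat" and S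
    by (induction S rule: infinite_finite_induct) (auto simp: lin0 lin_add)
  have lp: "lin (lpoly a j C \<zeta>) = 0" for \<zeta>
    using less.IH less.prems by (simp add: lpoly_def lin_sum lin_cmat)
  have ej: "expands F a (Suc j) C"
    using expands_mono[of F a "Suc j" "N - Suc j" C] e less.prems by simp
  show ?case
  proof (rule ord0_ge_lin_zero[OF lin_diff lin_cmat lin_manal])
    show "ord0_ge (\<lambda>\<zeta>. (F \<zeta> - lpoly a j C \<zeta>) - cmat (\<zeta> powi (a + int j)) (C j)) (a + int j + 1)"
      using ej unfolding expands_iff_ord by (rule ord0_ge_cong') (simp_all add: lpoly_Suc algebra_simps)
    show "\<forall>\<^sub>F \<zeta> in at 0. lin (F \<zeta> - lpoly a j C \<zeta>) = 0"
      using ev by eventually_elim (simp add: lin_diff lp)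
  qed auto
qed

lemma lin_so_props:
  "transpose (A - B) + (A - B) = (transpose A + A) - (transpose B + B)"
  "transpose (cmat c A) + cmat c A = cmat c (transpose A + A)"
  "manal H \<Longrightarrow> manal (\<lambda>\<zeta>. transpose (H \<zeta>) + H \<zeta>)"
  by (auto simp: transpose_diff transpose_cmat cmat_add intro!: manal_add manal_transpose)

lemma lin_sp_props:
  "transpose (A - B) ** \<sigma> + \<sigma> ** (A - B) = (transpose A ** \<sigma> + \<sigma> ** A) - (transpose B ** \<sigma> + \<sigma> ** B)"
  "transpose (cmat c A) ** \<sigma> + \<sigma> ** cmat c A = cmat c (transpose A ** \<sigma> + \<sigma> ** A)"
  "manal H \<Longrightarrow> manal (\<lambda>\<zeta>. transpose (H \<zeta>) ** \<sigma> + \<sigma> ** H \<zeta>)"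
  by (auto simp: transpose_diff transpose_cmat cmat_add matrix_diff_ldistrib matrix_diff_rdistrib
      intro!: manal_add manal_transpose manal_mult)

lemma tyF_comm_so:
  assumes kd: "kd = SO" and aa: "bil \<alpha> \<alpha> = 0" and F: "tyF kd \<sigma> \<alpha> F" and G: "tyF kd \<sigma> \<alpha> G"
    and lF: "eventually (\<lambda>\<zeta>. transpose (F \<zeta>) = - F \<zeta>) (at 0)"
    and lG: "eventually (\<lambda>\<zeta>. transpose (G \<zeta>) = - G \<zeta>) (at 0)"
  shows "tyF kd \<sigma> \<alpha> (\<lambda>\<zeta>. comm (F \<zeta>) (G \<zeta>))"
proof -
  obtain \<beta> \<kappa> B where b: "bil \<beta> \<alpha> = 0" and B: "B *v \<alpha> = \<kappa> *s \<alpha>"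
    and oF: "ord0_ge (\<lambda>\<zeta>. F \<zeta> - cmat (inverse \<zeta>) (outer \<alpha> \<beta> - outer \<beta> \<alpha>) - B) 1"
    using F tyF_so[OF kd] by blast
  obtain \<beta>' \<kappa>' B' where b': "bil \<beta>' \<alpha> = 0" and B': "B' *v \<alpha> = \<kappa>' *s \<alpha>"
    and oG: "ord0_ge (\<lambda>\<zeta>. G \<zeta> - cmat (inverse \<zeta>) (outer \<alpha> \<beta>' - outer \<beta>' \<alpha>) - B') 1"
    using G tyF_so[OF kd] by blast
  have "expands F (-1) (length [outer \<alpha> \<beta> - outer \<beta> \<alpha>, B]) (nth [outer \<alpha> \<beta> - outer \<beta> \<alpha>, B])"
    unfolding expands_iff_ord by (rule ord0_ge_cong'[OF oF]) (simp_all add: lpoly_Suc algebra_simps)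
  then obtain X2 where "expands F (-1) (Suc (length [outer \<alpha> \<beta> - outer \<beta> \<alpha>, B])) (nth ([outer \<alpha> \<beta> - outer \<beta> \<alpha>, B] @ [X2]))"
    using expands_snoc by blast
  then have eF: "expands F (-1) 3 (nth [outer \<alpha> \<beta> - outer \<beta> \<alpha>, B, X2])" by (simp add: numeral_eq_Suc)
  have "expands G (-1) (length [outer \<alpha> \<beta>' - outer \<beta>' \<alpha>, B']) (nth [outer \<alpha> \<beta>' - outer \<beta>' \<alpha>, B'])"
    unfolding expands_iff_ord by (rule ord0_ge_cong'[OF oG]) (simp_all add: lpoly_Suc algebra_simps)
  then obtain Y2 where "expands G (-1) (Suc (length [outer \<alpha> \<beta>' - outer \<beta>' \<alpha>, B'])) (nth ([outer \<alpha> \<beta>' - outer \<beta>' \<alpha>, B'] @ [Y2]))"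
    using expands_snoc by blast
  then have eG: "expands G (-1) 3 (nth [outer \<alpha> \<beta>' - outer \<beta>' \<alpha>, B', Y2])" by (simp add: numeral_eq_Suc)
  have evF: "eventually (\<lambda>\<zeta>. transpose (F \<zeta>) + F \<zeta> = 0) (at 0)" using lF by eventually_elim simp
  have evG: "eventually (\<lambda>\<zeta>. transpose (G \<zeta>) + G \<zeta> = 0) (at 0)" using lG by eventually_elim simp
  note lF' = expands_lin[OF lin_so_props, OF _ eF evF]
  note lG' = expands_lin[OF lin_so_props, OF _ eG evG]
  have Bt: "transpose B = - B" using lF'[of 1] by (simp add: eq_neg_iff_add_eq_0)
  have X2t: "transpose X2 = - X2" using lF'[of 2] by (simp add: eq_neg_iff_add_eq_0)
  have Bt': "transpose B' = - B'" using lG'[of 1] by (simp add: eq_neg_iff_add_eq_0)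
  have Y2t: "transpose Y2 = - Y2" using lG'[of 2] by (simp add: eq_neg_iff_add_eq_0)
  have ec: "expands (\<lambda>\<zeta>. comm (F \<zeta>) (G \<zeta>)) (-2) 3
      (\<lambda>l. \<Sum>i\<le>l. comm ([outer \<alpha> \<beta> - outer \<beta> \<alpha>, B, X2] ! i) ([outer \<alpha> \<beta>' - outer \<beta>' \<alpha>, B', Y2] ! (l - i)))"
    using expands_comm[OF eF eG] by (simp add: conv_comm)
  note alg = so_alg[OF aa b b' B B' Bt Bt' X2t Y2t]
  let ?\<gamma> = "B *v \<beta>' + \<kappa> *s \<beta>' - B' *v \<beta> - \<kappa>' *s \<beta>"
  let ?L0 = "comm (outer \<alpha> \<beta> - outer \<beta> \<alpha>) Y2 + comm B B' + comm X2 (outer \<alpha> \<beta>' - outer \<beta>' \<alpha>)"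
  have a2: "comm B (outer \<alpha> \<beta>' - outer \<beta>' \<alpha>) + comm (outer \<alpha> \<beta> - outer \<beta> \<alpha>) B' = outer \<alpha> ?\<gamma> - outer ?\<gamma> \<alpha>"
    using alg(2) by (simp add: add.commute)
  have "ord0_ge (\<lambda>\<zeta>. comm (F \<zeta>) (G \<zeta>) - cmat (inverse \<zeta>) (outer \<alpha> ?\<gamma> - outer ?\<gamma> \<alpha>) - ?L0) 1"
    using ec unfolding expands_iff_ord
    by (rule ord0_ge_cong') (simp_all add: lpoly_Suc numeral_eq_Suc atMost_Suc alg(1) a2 algebra_simps)
  moreover have "?L0 *v \<alpha> = (bil \<beta> (Y2 *v \<alpha>) + \<kappa> * \<kappa>' - bil \<beta>' (X2 *v \<alpha>) - \<kappa>' * \<kappa>) *s \<alpha>"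
    by (rule alg(4))
  ultimately show ?thesis
    using alg(3) tyF_so[OF kd] by blast
qed


lemma powi_m2: "(z::complex) powi (-2) = inverse (z^2)"
  by (simp add: power_int_def power_inverse)

lemma tyF_comm_sp:
  assumes kd: "kd = SP" and st: "transpose \<sigma> = - \<sigma>" and F: "tyF kd \<sigma> \<alpha> F" and G: "tyF kd \<sigma> \<alpha> G"
    and lF: "eventually (\<lambda>\<zeta>. transpose (F \<zeta>) ** \<sigma> + \<sigma> ** F \<zeta> = 0) (at 0)"
    and lG: "eventually (\<lambda>\<zeta>. transpose (G \<zeta>) ** \<sigma> + \<sigma> ** G \<zeta> = 0) (at 0)"
  shows "tyF kd \<sigma> \<alpha> (\<lambda>\<zeta>. comm (F \<zeta>) (G \<zeta>))"
proof -
  let ?E = "outer \<alpha> \<alpha> ** \<sigma>"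
  obtain \<beta> \<nu> \<kappa> B C where b: "bil \<beta> (\<sigma> *v \<alpha>) = 0" and B: "B *v \<alpha> = \<kappa> *s \<alpha>"
    and c: "bil \<alpha> (\<sigma> *v (C *v \<alpha>)) = 0"
    and oF: "ord0_ge (\<lambda>\<zeta>. F \<zeta> - cmat (inverse (\<zeta>^2)) (cmat \<nu> ?E)
                            - cmat (inverse \<zeta>) ((outer \<alpha> \<beta> + outer \<beta> \<alpha>) ** \<sigma>) - B - cmat \<zeta> C) 2"
    using F tyF_sp[OF kd] by blast
  obtain \<beta>' \<nu>' \<kappa>' B' C' where b': "bil \<beta>' (\<sigma> *v \<alpha>) = 0" and B': "B' *v \<alpha> = \<kappa>' *s \<alpha>"
    and c': "bil \<alpha> (\<sigma> *v (C' *v \<alpha>)) = 0"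
    and oG: "ord0_ge (\<lambda>\<zeta>. G \<zeta> - cmat (inverse (\<zeta>^2)) (cmat \<nu>' ?E)
                            - cmat (inverse \<zeta>) ((outer \<alpha> \<beta>' + outer \<beta>' \<alpha>) ** \<sigma>) - B' - cmat \<zeta> C') 2"
    using G tyF_sp[OF kd] by blast
  have "expands F (-2) (length [cmat \<nu> ?E, Sym \<sigma> \<alpha> \<beta>, B, C]) (nth [cmat \<nu> ?E, Sym \<sigma> \<alpha> \<beta>, B, C])"
    unfolding expands_iff_ord
    by (rule ord0_ge_cong'[OF oF]) (simp_all add: lpoly_Suc powi_m2 Sym_def algebra_simps)
  then obtain D where "expands F (-2) (Suc (length [cmat \<nu> ?E, Sym \<sigma> \<alpha> \<beta>, B, C])) (nth ([cmat \<nu> ?E, Sym \<sigma> \<alpha> \<beta>, B, C] @ [D]))"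
    using expands_snoc by blast
  then have "expands F (-2) (length [cmat \<nu> ?E, Sym \<sigma> \<alpha> \<beta>, B, C, D]) (nth [cmat \<nu> ?E, Sym \<sigma> \<alpha> \<beta>, B, C, D])"
    by simp
  then obtain Lx where "expands F (-2) (Suc (length [cmat \<nu> ?E, Sym \<sigma> \<alpha> \<beta>, B, C, D])) (nth ([cmat \<nu> ?E, Sym \<sigma> \<alpha> \<beta>, B, C, D] @ [Lx]))"
    using expands_snoc by blast
  then have eF: "expands F (-2) 6 (nth [cmat \<nu> ?E, Sym \<sigma> \<alpha> \<beta>, B, C, D, Lx])"
    by (simp add: numeral_eq_Suc)
  have "expands G (-2) (length [cmat \<nu>' ?E, Sym \<sigma> \<alpha> \<beta>', B', C']) (nth [cmat \<nu>' ?E, Sym \<sigma> \<alpha> \<beta>', B', C'])"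
    unfolding expands_iff_ord
    by (rule ord0_ge_cong'[OF oG]) (simp_all add: lpoly_Suc powi_m2 Sym_def algebra_simps)
  then obtain D' where "expands G (-2) (Suc (length [cmat \<nu>' ?E, Sym \<sigma> \<alpha> \<beta>', B', C'])) (nth ([cmat \<nu>' ?E, Sym \<sigma> \<alpha> \<beta>', B', C'] @ [D']))"
    using expands_snoc by blast
  then have "expands G (-2) (length [cmat \<nu>' ?E, Sym \<sigma> \<alpha> \<beta>', B', C', D']) (nth [cmat \<nu>' ?E, Sym \<sigma> \<alpha> \<beta>', B', C', D'])"
    by simp
  then obtain Lx' where "expands G (-2) (Suc (length [cmat \<nu>' ?E, Sym \<sigma> \<alpha> \<beta>', B', C', D'])) (nth ([cmat \<nu>' ?E, Sym \<sigma> \<alpha> \<beta>', B', C', D'] @ [Lx']))"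
    using expands_snoc by blast
  then have eG: "expands G (-2) 6 (nth [cmat \<nu>' ?E, Sym \<sigma> \<alpha> \<beta>', B', C', D', Lx'])"
    by (simp add: numeral_eq_Suc)
  note lF' = expands_lin[OF lin_sp_props, OF _ eF lF]
  note lG' = expands_lin[OF lin_sp_props, OF _ eG lG]
  have sB: "spm \<sigma> B" using lF'[of 2] by (simp add: spm_def)
  have sC: "spm \<sigma> C" using lF'[of 3] by (simp add: spm_def numeral_eq_Suc)
  have sB': "spm \<sigma> B'" using lG'[of 2] by (simp add: spm_def)
  have sC': "spm \<sigma> C'" using lG'[of 3] by (simp add: spm_def numeral_eq_Suc)
  define \<Gamma> where "\<Gamma> = (\<lambda>l. \<Sum>i\<le>l. comm ([cmat \<nu> ?E, Sym \<sigma> \<alpha> \<beta>, B, C, D, Lx] ! i) ([cmat \<nu>' ?E, Sym \<sigma> \<alpha> \<beta>', B', C', D', Lx'] ! (l - i)))"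
  have ec: "expands (\<lambda>\<zeta>. comm (F \<zeta>) (G \<zeta>)) (-4) 6 \<Gamma>"
    using expands_comm[OF eF eG] by (simp add: conv_comm \<Gamma>_def)
  define \<gamma> where "\<gamma> = - (\<nu> *s (C' *v \<alpha>)) - (B' *v \<beta> + \<kappa>' *s \<beta>) + (B *v \<beta>' + \<kappa> *s \<beta>') + \<nu>' *s (C *v \<alpha>)"
  define \<nu>n where "\<nu>n = 2 * (\<nu>' * \<kappa> - \<nu> * \<kappa>' + bil \<beta> (\<sigma> *v \<beta>'))"
  define \<kappa>n where "\<kappa>n = \<nu> * bil \<alpha> (\<sigma> *v (D' *v \<alpha>)) + bil \<beta> (\<sigma> *v (C' *v \<alpha>)) - bil \<beta>' (\<sigma> *v (C *v \<alpha>)) - \<nu>' * bil \<alpha> (\<sigma> *v (D *v \<alpha>))"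
  have G0: "\<Gamma> 0 = 0" by (simp add: \<Gamma>_def comm_cmat_left comm_cmat_right)
  have G1: "\<Gamma> 1 = 0"
    using sp1[where \<nu>=\<nu> and \<nu>'=\<nu>', OF st b b'] by (simp add: \<Gamma>_def add_ac)
  have G2: "\<Gamma> 2 = cmat \<nu>n ?E"
    using sp2[where \<nu>=\<nu> and \<nu>'=\<nu>', OF st b b' sB sB' B B'] by (simp add: \<Gamma>_def \<nu>n_def atMost_Suc numeral_eq_Suc add_ac)
  have G3: "\<Gamma> 3 = Sym \<sigma> \<alpha> \<gamma>" and g3: "bil \<gamma> (\<sigma> *v \<alpha>) = 0"
    using sp3[where \<nu>=\<nu> and \<nu>'=\<nu>', OF st b b' sB sB' sC sC' B B' c c'] by (simp_all add: \<Gamma>_def \<gamma>_def atMost_Suc numeral_eq_Suc add_ac)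
  have G4: "\<Gamma> 4 *v \<alpha> = \<kappa>n *s \<alpha>"
    using sp4[where \<nu>=\<nu> and \<nu>'=\<nu>' and D=D and D'=D', OF st b b' B B' c c'] by (simp add: \<Gamma>_def \<kappa>n_def atMost_Suc numeral_eq_Suc add_ac)
  have G5: "bil \<alpha> (\<sigma> *v (\<Gamma> 5 *v \<alpha>)) = 0"
    using sp5[where \<nu>=\<nu> and \<nu>'=\<nu>' and D=D and D'=D' and L=Lx and L'=Lx', OF st b b' sB sB' B B' c c'] by (simp add: \<Gamma>_def atMost_Suc numeral_eq_Suc add_ac)
  have G1': "\<Gamma> (Suc 0) = 0" using G1 by simp
  have G2': "\<Gamma> (Suc (Suc 0)) = cmat \<nu>n ?E" using G2 by (simp add: numeral_2_eq_2)
  have G3': "\<Gamma> (Suc (Suc (Suc 0))) = Sym \<sigma> \<alpha> \<gamma>" using G3 by (simp add: numeral_3_eq_3)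
  have "ord0_ge (\<lambda>\<zeta>. comm (F \<zeta>) (G \<zeta>) - cmat (inverse (\<zeta>^2)) (cmat \<nu>n ?E)
                            - cmat (inverse \<zeta>) ((outer \<alpha> \<gamma> + outer \<gamma> \<alpha>) ** \<sigma>) - \<Gamma> 4 - cmat \<zeta> (\<Gamma> 5)) 2"
    using ec unfolding expands_iff_ord
    by (rule ord0_ge_cong') (simp_all add: lpoly_Suc numeral_eq_Suc G0 G1' G2' G3' powi_m2[unfolded numeral_eq_Suc] Sym_def algebra_simps)
  then show ?thesis
    using g3 G4 G5 tyF_sp[OF kd] by blast
qed


lemma tyF_comm:
  assumes F: "tyF kd \<sigma> \<alpha> F" and G: "tyF kd \<sigma> \<alpha> G"
    and lF: "eventually (\<lambda>\<zeta>. in_lie kd \<sigma> (F \<zeta>)) (at 0)"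
    and lG: "eventually (\<lambda>\<zeta>. in_lie kd \<sigma> (G \<zeta>)) (at 0)"
    and sp: "kd = SP \<Longrightarrow> transpose \<sigma> = - \<sigma>" and so: "kd = SO \<Longrightarrow> bil \<alpha> \<alpha> = 0"
  shows "tyF kd \<sigma> \<alpha> (\<lambda>\<zeta>. comm (F \<zeta>) (G \<zeta>))"
proof (cases kd)
  case SO
  show ?thesis
    by (rule tyF_comm_so[OF SO so[OF SO] F G]) (use lF lG SO in \<open>simp_all add: in_lie_def\<close>)
next
  case SP
  show ?thesis
    by (rule tyF_comm_sp[OF SP sp[OF SP] F G]) (use lF lG SP in \<open>simp_all add: in_lie_def\<close>)
qed (use tyF_comm_gl[OF _ _ F G] in auto)

lemma tyF_diff:
  assumes F: "tyF kd \<sigma> \<alpha> F" and G: "tyF kd \<sigma> \<alpha> G"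
  shows "tyF kd \<sigma> \<alpha> (\<lambda>\<zeta>. F \<zeta> - G \<zeta>)"
proof (cases "kd = SO \<or> kd = SP")
  case False
  then have kd: "kd \<noteq> SO" "kd \<noteq> SP" by auto
  obtain \<beta> \<kappa> B where b: "bil \<beta> \<alpha> = 0" and B: "B *v \<alpha> = \<kappa> *s \<alpha>"
    and oF: "ord0_ge (\<lambda>\<zeta>. F \<zeta> - cmat (inverse \<zeta>) (outer \<alpha> \<beta>) - B) 1"
    using F tyF_gl[OF kd] by blast
  obtain \<beta>' \<kappa>' B' where b': "bil \<beta>' \<alpha> = 0" and B': "B' *v \<alpha> = \<kappa>' *s \<alpha>"
    and oG: "ord0_ge (\<lambda>\<zeta>. G \<zeta> - cmat (inverse \<zeta>) (outer \<alpha> \<beta>') - B') 1"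
    using G tyF_gl[OF kd] by blast
  have "ord0_ge (\<lambda>\<zeta>. (F \<zeta> - G \<zeta>) - cmat (inverse \<zeta>) (outer \<alpha> (\<beta> - \<beta>')) - (B - B')) 1"
    by (rule ord0_ge_cong[OF ord0_ge_diff[OF oF oG]]) (simp add: outer_diff2 cmat_diff algebra_simps)
  moreover have "bil (\<beta> - \<beta>') \<alpha> = 0" using b b' by (simp add: bil_diff1)
  moreover have "(B - B') *v \<alpha> = (\<kappa> - \<kappa>') *s \<alpha>" using B B' by (simp add: mv_diff vector_sub_rdistrib)
  ultimately show ?thesis using tyF_gl[OF kd] by blast
next
  case True
  then show ?thesis
  proof
    assume kd: "kd = SO"
    obtain \<beta> \<kappa> B where b: "bil \<beta> \<alpha> = 0" and B: "B *v \<alpha> = \<kappa> *s \<alpha>"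
      and oF: "ord0_ge (\<lambda>\<zeta>. F \<zeta> - cmat (inverse \<zeta>) (outer \<alpha> \<beta> - outer \<beta> \<alpha>) - B) 1"
      using F tyF_so[OF kd] by blast
    obtain \<beta>' \<kappa>' B' where b': "bil \<beta>' \<alpha> = 0" and B': "B' *v \<alpha> = \<kappa>' *s \<alpha>"
      and oG: "ord0_ge (\<lambda>\<zeta>. G \<zeta> - cmat (inverse \<zeta>) (outer \<alpha> \<beta>' - outer \<beta>' \<alpha>) - B') 1"
      using G tyF_so[OF kd] by blast
    have "ord0_ge (\<lambda>\<zeta>. (F \<zeta> - G \<zeta>) - cmat (inverse \<zeta>) (outer \<alpha> (\<beta> - \<beta>') - outer (\<beta> - \<beta>') \<alpha>) - (B - B')) 1"
      by (rule ord0_ge_cong[OF ord0_ge_diff[OF oF oG]]) (simp add: outer_diff1 outer_diff2 cmat_diff cmat_add algebra_simps)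
    moreover have "bil (\<beta> - \<beta>') \<alpha> = 0" using b b' by (simp add: bil_diff1)
    moreover have "(B - B') *v \<alpha> = (\<kappa> - \<kappa>') *s \<alpha>" using B B' by (simp add: mv_diff vector_sub_rdistrib)
    ultimately show ?thesis using tyF_so[OF kd] by blast
  next
    assume kd: "kd = SP"
    let ?E = "outer \<alpha> \<alpha> ** \<sigma>"
    obtain \<beta> \<nu> \<kappa> B C where b: "bil \<beta> (\<sigma> *v \<alpha>) = 0" and B: "B *v \<alpha> = \<kappa> *s \<alpha>"
      and c: "bil \<alpha> (\<sigma> *v (C *v \<alpha>)) = 0"
      and oF: "ord0_ge (\<lambda>\<zeta>. F \<zeta> - cmat (inverse (\<zeta>^2)) (cmat \<nu> ?E)
                            - cmat (inverse \<zeta>) ((outer \<alpha> \<beta> + outer \<beta> \<alpha>) ** \<sigma>) - B - cmat \<zeta> C) 2"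
      using F tyF_sp[OF kd] by blast
    obtain \<beta>' \<nu>' \<kappa>' B' C' where b': "bil \<beta>' (\<sigma> *v \<alpha>) = 0" and B': "B' *v \<alpha> = \<kappa>' *s \<alpha>"
      and c': "bil \<alpha> (\<sigma> *v (C' *v \<alpha>)) = 0"
      and oG: "ord0_ge (\<lambda>\<zeta>. G \<zeta> - cmat (inverse (\<zeta>^2)) (cmat \<nu>' ?E)
                            - cmat (inverse \<zeta>) ((outer \<alpha> \<beta>' + outer \<beta>' \<alpha>) ** \<sigma>) - B' - cmat \<zeta> C') 2"
      using G tyF_sp[OF kd] by blast
    have sd: "(outer \<alpha> (\<beta> - \<beta>') + outer (\<beta> - \<beta>') \<alpha>) ** \<sigma> = (outer \<alpha> \<beta> + outer \<beta> \<alpha>) ** \<sigma> - (outer \<alpha> \<beta>' + outer \<beta>' \<alpha>) ** \<sigma>"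
      using Sym_diff[of \<sigma> \<alpha> \<beta> \<beta>'] by (simp add: Sym_def)
    have "ord0_ge (\<lambda>\<zeta>. (F \<zeta> - G \<zeta>) - cmat (inverse (\<zeta>^2)) (cmat (\<nu> - \<nu>') ?E)
                            - cmat (inverse \<zeta>) ((outer \<alpha> (\<beta> - \<beta>') + outer (\<beta> - \<beta>') \<alpha>) ** \<sigma>) - (B - B') - cmat \<zeta> (C - C')) 2"
      by (rule ord0_ge_cong[OF ord0_ge_diff[OF oF oG]])
         (simp only: sd cmat_diff cmat_diff_left, simp add: algebra_simps)
    moreover have "bil (\<beta> - \<beta>') (\<sigma> *v \<alpha>) = 0" using b b' by (simp add: bil_diff1)
    moreover have "(B - B') *v \<alpha> = (\<kappa> - \<kappa>') *s \<alpha>" using B B' by (simp add: mv_diff vector_sub_rdistrib)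
    moreover have "bil \<alpha> (\<sigma> *v ((C - C') *v \<alpha>)) = 0" using c c' by (simp add: mv_diff mv_vdiff bil_diff2)
    ultimately show ?thesis using tyF_sp[OF kd] by blast
  qed
qed


lemma chart_inj: "is_chart U \<phi> \<Longrightarrow> inj_on \<phi> U"
  unfolding is_chart_def homeomorphism_def by (metis inj_on_inverseI)

lemma chart_open: "is_chart U \<phi> \<Longrightarrow> open U" "is_chart U \<phi> \<Longrightarrow> open (\<phi> ` U)"
  by (auto simp: is_chart_def)

lemma chart_inv_in: "is_chart U \<phi> \<Longrightarrow> z \<in> \<phi> ` U \<Longrightarrow> inv_into U \<phi> z \<in> U \<and> \<phi> (inv_into U \<phi> z) = z"
  by (auto intro: inv_into_into f_inv_into_f)

lemma chart_inv_f: "is_chart U \<phi> \<Longrightarrow> x \<in> U \<Longrightarrow> inv_into U \<phi> (\<phi> x) = x"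
  by (rule inv_into_f_f[OF chart_inj])

lemma chart_open_image:
  assumes "is_chart U \<phi>" "open V" "V \<subseteq> U"
  shows "open (\<phi> ` V)"
proof -
  obtain g where h: "homeomorphism U (\<phi> ` U) \<phi> g" using assms(1) by (auto simp: is_chart_def)
  have "openin (top_of_set (\<phi> ` U)) (\<phi> ` V)"
    by (rule homeomorphism_imp_open_map[OF h]) (use assms in \<open>simp add: open_subset\<close>)
  then show ?thesis using chart_open(2)[OF assms(1)] by (rule openin_open_trans)
qed

lemma chart_transfer_ev:
  assumes U: "is_chart U \<phi>" and V: "is_chart V \<psi>" and p: "p \<in> U" "p \<in> V"
  shows "eventually (\<lambda>\<zeta>. inv_into V \<psi> ((\<psi> \<circ> inv_into U \<phi>) \<zeta>) = inv_into U \<phi> \<zeta>) (nhds (\<phi> p))"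
proof -
  have o: "open (\<phi> ` (U \<inter> V))"
    by (rule chart_open_image[OF U]) (use chart_open[OF U] chart_open[OF V] in auto)
  have "eventually (\<lambda>\<zeta>. \<zeta> \<in> \<phi> ` (U \<inter> V)) (nhds (\<phi> p))"
    by (rule eventually_nhds_in_open[OF o]) (use p in auto)
  then show ?thesis
  proof eventually_elim
    case (elim \<zeta>)
    then obtain y where y: "y \<in> U \<inter> V" "\<zeta> = \<phi> y" by auto
    then have "inv_into U \<phi> \<zeta> = y" using chart_inv_f[OF U] by auto
    then show ?case using y chart_inv_f[OF V] by auto
  qed
qed

lemma transfer_maps:
  assumes U: "is_chart U \<phi>" and V: "is_chart V \<psi>"
    and hol: "(\<psi> \<circ> inv_into U \<phi>) holomorphic_on \<phi> ` (U \<inter> V)" and p: "p \<in> U" "p \<in> V"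
  shows "(\<psi> \<circ> inv_into U \<phi>) analytic_on {\<phi> p}" "(\<psi> \<circ> inv_into U \<phi>) ` {\<phi> p} = {\<psi> p}"
proof -
  have o: "open (\<phi> ` (U \<inter> V))"
    by (rule chart_open_image[OF U]) (use chart_open[OF U] chart_open[OF V] in auto)
  have "(\<psi> \<circ> inv_into U \<phi>) analytic_on \<phi> ` (U \<inter> V)" using hol o by (simp add: analytic_on_open)
  then show "(\<psi> \<circ> inv_into U \<phi>) analytic_on {\<phi> p}" by (rule analytic_on_subset) (use p in auto)
  show "(\<psi> \<circ> inv_into U \<phi>) ` {\<phi> p} = {\<psi> p}" using chart_inv_f[OF U p(1)] by simp
qed

lemma analytic_transfer:
  assumes U: "is_chart U \<phi>" and V: "is_chart V \<psi>"
    and hol: "(\<psi> \<circ> inv_into U \<phi>) holomorphic_on \<phi> ` (U \<inter> V)" and p: "p \<in> U" "p \<in> V"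
    and f: "(\<lambda>\<zeta>. f (inv_into V \<psi> \<zeta>)) analytic_on {\<psi> p}"
  shows "(\<lambda>\<zeta>. f (inv_into U \<phi> \<zeta>)) analytic_on {\<phi> p}"
proof -
  note tm = transfer_maps[OF U V hol p]
  have c: "((\<lambda>\<zeta>. f (inv_into V \<psi> \<zeta>)) \<circ> (\<psi> \<circ> inv_into U \<phi>)) analytic_on {\<phi> p}"
    by (rule analytic_on_compose[OF tm(1)]) (use f tm(2) in simp)
  have ev: "eventually (\<lambda>\<zeta>. ((\<lambda>\<zeta>. f (inv_into V \<psi> \<zeta>)) \<circ> (\<psi> \<circ> inv_into U \<phi>)) \<zeta> = f (inv_into U \<phi> \<zeta>)) (nhds (\<phi> p))"
    using chart_transfer_ev[OF U V p] by eventually_elim simp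
  show ?thesis using analytic_at_cong[OF ev refl] c by (simp add: o_def)
qed

lemma meromorphic_transfer:
  assumes U: "is_chart U \<phi>" and V: "is_chart V \<psi>"
    and hol: "(\<psi> \<circ> inv_into U \<phi>) holomorphic_on \<phi> ` (U \<inter> V)" and p: "p \<in> U" "p \<in> V"
    and f: "(\<lambda>\<zeta>. f (inv_into V \<psi> \<zeta>)) meromorphic_on {\<psi> p}"
  shows "(\<lambda>\<zeta>. f (inv_into U \<phi> \<zeta>)) meromorphic_on {\<phi> p}"
proof -
  note tm = transfer_maps[OF U V hol p]
  have "(\<lambda>w. (\<lambda>\<zeta>. f (inv_into V \<psi> \<zeta>)) ((\<psi> \<circ> inv_into U \<phi>) w)) meromorphic_on {\<phi> p}"
    by (rule meromorphic_on_compose[OF f tm(1)]) (use tm(2) in simp)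
  moreover have "eventually (\<lambda>\<zeta>. (\<lambda>\<zeta>. f (inv_into V \<psi> \<zeta>)) ((\<psi> \<circ> inv_into U \<phi>) \<zeta>) = f (inv_into U \<phi> \<zeta>)) (at (\<phi> p))"
    using chart_transfer_ev[OF U V p] unfolding eventually_at_filter by eventually_elim simp
  ultimately show ?thesis
    by (subst (asm) meromorphic_on_cong) auto
qed

lemma atlas_chart: "compact_riemann_surface atlas \<Longrightarrow> (U, \<phi>) \<in> atlas \<Longrightarrow> is_chart U \<phi>"
  unfolding compact_riemann_surface_def by blast

lemma atlas_compat_hol: "compact_riemann_surface atlas \<Longrightarrow> (U, \<phi>) \<in> atlas \<Longrightarrow> (V, \<psi>) \<in> atlas \<Longrightarrow>
    (\<psi> \<circ> inv_into U \<phi>) holomorphic_on (\<phi> ` (U \<inter> V))"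
  unfolding compact_riemann_surface_def charts_compatible_def by blast

lemma holomorphic_at_any:
  fixes L :: "'s::t2_space \<Rightarrow> 'n::finite mat"
  assumes surf: "compact_riemann_surface atlas" and h: "holomorphic_at atlas L x"
    and U: "(U, \<phi>) \<in> atlas" "x \<in> U"
  shows "(\<lambda>\<zeta>. L (inv_into U \<phi> \<zeta>) $ i $ j) analytic_on {\<phi> x}"
proof -
  obtain V \<psi> where V: "(V, \<psi>) \<in> atlas" "x \<in> V" and a: "(\<lambda>\<zeta>. L (inv_into V \<psi> \<zeta>) $ i $ j) analytic_on {\<psi> x}"
    using h unfolding holomorphic_at_def by blast
  show ?thesis
    by (rule analytic_transfer[OF atlas_chart[OF surf U(1)] atlas_chart[OF surf V(1)]
          atlas_compat_hol[OF surf U(1) V(1)] U(2) V(2), of "\<lambda>y. L y $ i $ j"]) (use a in simp)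
qed

lemma meromorphic_at_any:
  fixes L :: "'s::t2_space \<Rightarrow> 'n::finite mat"
  assumes surf: "compact_riemann_surface atlas" and h: "meromorphic_at atlas L x"
    and U: "(U, \<phi>) \<in> atlas" "x \<in> U"
  shows "(\<lambda>\<zeta>. L (inv_into U \<phi> \<zeta>) $ i $ j) meromorphic_on {\<phi> x}"
proof -
  obtain V \<psi> where V: "(V, \<psi>) \<in> atlas" "x \<in> V" and a: "(\<lambda>\<zeta>. L (inv_into V \<psi> \<zeta>) $ i $ j) meromorphic_on {\<psi> x}"
    using h unfolding meromorphic_at_def by blast
  show ?thesis
    by (rule meromorphic_transfer[OF atlas_chart[OF surf U(1)] atlas_chart[OF surf V(1)]
          atlas_compat_hol[OF surf U(1) V(1)] U(2) V(2), of "\<lambda>y. L y $ i $ j"]) (use a in simp)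
qed

lemma comm_entry: "comm A B $ i $ j = (\<Sum>k\<in>UNIV. A $ i $ k * B $ k $ j) - (\<Sum>k\<in>UNIV. B $ i $ k * A $ k $ j)"
  by (simp add: comm_def matrix_matrix_mult_def)

lemma holomorphic_at_comm:
  fixes L L' :: "'s::t2_space \<Rightarrow> 'n::finite mat"
  assumes surf: "compact_riemann_surface atlas" and h: "holomorphic_at atlas L x" "holomorphic_at atlas L' x"
  shows "holomorphic_at atlas (\<lambda>x. comm (L x) (L' x)) x" "holomorphic_at atlas (\<lambda>x. L x - L' x) x"
proof -
  obtain U \<phi> where U: "(U, \<phi>) \<in> atlas" "x \<in> U"
    using h(1) unfolding holomorphic_at_def by blast
  note a = holomorphic_at_any[OF surf h(1) U] holomorphic_at_any[OF surf h(2) U]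
  have "\<forall>i j. (\<lambda>\<zeta>. comm (L (inv_into U \<phi> \<zeta>)) (L' (inv_into U \<phi> \<zeta>)) $ i $ j) analytic_on {\<phi> x}"
    unfolding comm_entry by (intro allI analytic_intros a)
  then show "holomorphic_at atlas (\<lambda>x. comm (L x) (L' x)) x"
    unfolding holomorphic_at_def using U by blast
  have "\<forall>i j. (\<lambda>\<zeta>. (L (inv_into U \<phi> \<zeta>) - L' (inv_into U \<phi> \<zeta>)) $ i $ j) analytic_on {\<phi> x}"
    by (simp, intro allI analytic_intros a)
  then show "holomorphic_at atlas (\<lambda>x. L x - L' x) x"
    unfolding holomorphic_at_def using U by blast
qed

lemma meromorphic_at_comm:
  fixes L L' :: "'s::t2_space \<Rightarrow> 'n::finite mat"
  assumes surf: "compact_riemann_surface atlas" and h: "meromorphic_at atlas L x" "meromorphic_at atlas L' x"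
  shows "meromorphic_at atlas (\<lambda>x. comm (L x) (L' x)) x" "meromorphic_at atlas (\<lambda>x. L x - L' x) x"
proof -
  obtain U \<phi> where U: "(U, \<phi>) \<in> atlas" "x \<in> U"
    using h(1) unfolding meromorphic_at_def by blast
  note a = meromorphic_at_any[OF surf h(1) U] meromorphic_at_any[OF surf h(2) U]
  have "\<forall>i j. (\<lambda>\<zeta>. comm (L (inv_into U \<phi> \<zeta>)) (L' (inv_into U \<phi> \<zeta>)) $ i $ j) meromorphic_on {\<phi> x}"
    unfolding comm_entry by (intro allI meromorphic_intros a)
  then show "meromorphic_at atlas (\<lambda>x. comm (L x) (L' x)) x"
    unfolding meromorphic_at_def using U by blast
  have "\<forall>i j. (\<lambda>\<zeta>. (L (inv_into U \<phi> \<zeta>) - L' (inv_into U \<phi> \<zeta>)) $ i $ j) meromorphic_on {\<phi> x}"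
    by (simp, intro allI meromorphic_intros a)
  then show "meromorphic_at atlas (\<lambda>x. L x - L' x) x"
    unfolding meromorphic_at_def using U by blast
qed

lemma lc_chart: "local_coordinate_at atlas g c \<Longrightarrow> is_chart (fst c) (snd c) \<and> g \<in> fst c \<and> snd c g = 0"
  by (simp add: local_coordinate_at_def compatible_chart_def)

lemma lc_ev_image:
  assumes "local_coordinate_at atlas g c"
  shows "eventually (\<lambda>\<zeta>. \<zeta> \<in> snd c ` fst c) (at 0)"
proof -
  note l = lc_chart[OF assms]
  have "0 \<in> snd c ` fst c" using l by (metis image_eqI)
  then have "eventually (\<lambda>\<zeta>. \<zeta> \<in> snd c ` fst c) (nhds 0)"
    using chart_open(2)[of "fst c" "snd c"] l by (intro eventually_nhds_in_open) auto
  then show ?thesis unfolding eventually_at_filter by eventually_elim simp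
qed

lemma lc_ev_coord:
  assumes "local_coordinate_at atlas g c"
  shows "eventually (\<lambda>\<zeta>. snd c (inv_into (fst c) (snd c) \<zeta>) = \<zeta>) (at 0)"
  using lc_ev_image[OF assms] by eventually_elim (auto intro: f_inv_into_f)

lemma lie_near:
  fixes g :: "'s::t2_space"
  assumes lc: "local_coordinate_at atlas g c" and Z: "finite Z" and P: "\<And>x. x \<notin> Z \<Longrightarrow> P x"
  shows "eventually (\<lambda>\<zeta>. P (inv_into (fst c) (snd c) \<zeta>)) (at 0)"
proof -
  obtain U \<phi> where c: "c = (U, \<phi>)" by (cases c)
  note l = lc_chart[OF lc, unfolded c fst_conv snd_conv]
  obtain h where hom: "homeomorphism U (\<phi> ` U) \<phi> h" using l by (auto simp: is_chart_def)
  have im: "eventually (\<lambda>\<zeta>. \<zeta> \<in> \<phi> ` U) (at 0)" using lc_ev_image[OF lc] by (simp add: c)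
  have eqh: "eventually (\<lambda>\<zeta>. inv_into U \<phi> \<zeta> = h \<zeta>) (at 0)"
    using im
  proof eventually_elim
    case (elim \<zeta>)
    then obtain y where y: "y \<in> U" "\<zeta> = \<phi> y" by auto
    then show ?case using hom chart_inv_f[OF l[THEN conjunct1] y(1)] by (simp add: homeomorphism_def)
  qed
  have h0: "h 0 = g" using hom l by (metis homeomorphism_apply1)
  have "continuous_on (\<phi> ` U) h" using hom by (simp add: homeomorphism_def)
  then have "isCont h 0" using chart_open(2)[OF l[THEN conjunct1]] l
    by (metis continuous_on_eq_continuous_at image_eqI)
  then have tl: "(h \<longlongrightarrow> g) (at 0)" using h0 by (simp add: isCont_def)
  have "eventually (\<lambda>\<zeta>. inv_into U \<phi> \<zeta> \<noteq> z) (at 0)" for z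
  proof (cases "z = g")
    case True
    have "eventually (\<lambda>\<zeta>. \<zeta> \<noteq> 0) (at (0::complex))" by (simp add: eventually_at_filter)
    then show ?thesis using im
    proof eventually_elim
      case (elim \<zeta>)
      then have "\<phi> (inv_into U \<phi> \<zeta>) = \<zeta>" by (auto intro: f_inv_into_f)
      then show ?case using True elim l by auto
    qed
  next
    case False
    then obtain W where W: "open W" "g \<in> W" "z \<notin> W" using separation_t1[of g z] False by blast
    have "eventually (\<lambda>\<zeta>. h \<zeta> \<in> W) (at 0)" using topological_tendstoD[OF tl W(1,2)] .
    then show ?thesis using eqh by eventually_elim (use W in auto)
  qed
  then have "eventually (\<lambda>\<zeta>. \<forall>z\<in>Z. inv_into U \<phi> \<zeta> \<noteq> z) (at 0)"
    by (intro eventually_ball_finite Z) auto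
  then show ?thesis unfolding c by eventually_elim (use P in auto)
qed


lemma in_lie_comm:
  assumes "in_lie kd \<sigma> X" "in_lie kd \<sigma> Y"
  shows "in_lie kd \<sigma> (comm X Y)"
proof (cases kd)
  case SL then show ?thesis using assms
    by (simp add: in_lie_def comm_def trace_sub trace_mul_sym[of X Y])
next
  case SO then show ?thesis using assms
    by (simp add: in_lie_def comm_def transpose_diff matrix_transpose_mul matrix_uminus_left matrix_uminus_right)
next
  case SP
  then have x: "transpose X ** \<sigma> = - (\<sigma> ** X)" and y: "transpose Y ** \<sigma> = - (\<sigma> ** Y)"
    using assms by (simp_all add: in_lie_def eq_neg_iff_add_eq_0)
  have a: "transpose (A ** B) ** \<sigma> = \<sigma> ** B ** A"
    if a1: "transpose A ** \<sigma> = - (\<sigma> ** A)" and b1: "transpose B ** \<sigma> = - (\<sigma> ** B)" for A B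
  proof -
    have "transpose (A ** B) ** \<sigma> = transpose B ** (transpose A ** \<sigma>)"
      by (simp add: matrix_transpose_mul matrix_mul_assoc)
    also have "\<dots> = - ((transpose B ** \<sigma>) ** A)"
      by (simp add: a1 matrix_uminus_right matrix_mul_assoc)
    also have "\<dots> = \<sigma> ** B ** A" by (simp add: b1 matrix_uminus_left)
    finally show ?thesis .
  qed
  have "transpose (comm X Y) ** \<sigma> + \<sigma> ** comm X Y
      = (transpose (X ** Y) ** \<sigma> - transpose (Y ** X) ** \<sigma>) + (\<sigma> ** (X ** Y) - \<sigma> ** (Y ** X))"
    by (simp add: comm_def transpose_diff matrix_diff_rdistrib matrix_diff_ldistrib)
  also have "\<dots> = 0" by (simp add: a[OF x y] a[OF y x] matrix_mul_assoc)
  finally show ?thesis using SP by (simp add: in_lie_def)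
qed (simp add: in_lie_def)

lemma in_lie_diff:
  assumes "in_lie kd \<sigma> X" "in_lie kd \<sigma> Y"
  shows "in_lie kd \<sigma> (X - Y)"
proof -
  have "transpose (X - Y) ** \<sigma> + \<sigma> ** (X - Y) = (transpose X ** \<sigma> + \<sigma> ** X) - (transpose Y ** \<sigma> + \<sigma> ** Y)"
    by (simp add: transpose_diff matrix_diff_ldistrib matrix_diff_rdistrib algebra_simps)
  then show ?thesis using assms by (cases kd) (auto simp: in_lie_def trace_sub transpose_diff)
qed

lemma in_coord_comm: "in_coord c (\<lambda>x. comm (L x) (L' x)) = (\<lambda>\<zeta>. comm (in_coord c L \<zeta>) (in_coord c L' \<zeta>))"
  by (simp add: in_coord_def)
lemma in_coord_diff: "in_coord c (\<lambda>x. L x - L' x) = (\<lambda>\<zeta>. in_coord c L \<zeta> - in_coord c L' \<zeta>)"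
  by (simp add: in_coord_def)

lemma lax_closed:
  fixes atlas :: "('s::t2_space set \<times> ('s \<Rightarrow> complex)) set" and \<sigma> :: "'n::finite mat"
  assumes surf: "compact_riemann_surface atlas" and finA: "finite A"
    and wc: "\<forall>s\<in>{1..K}. local_coordinate_at atlas (\<gamma> s) (wc s)"
    and sp: "kd = SP \<Longrightarrow> transpose \<sigma> = - \<sigma>"
    and so: "kd = SO \<Longrightarrow> \<forall>s\<in>{1..K}. bil (\<alpha> s) (\<alpha> s) = 0"
    and L: "L \<in> lax_algebra atlas kd \<sigma> A K \<gamma> \<alpha> wc" and L': "L' \<in> lax_algebra atlas kd \<sigma> A K \<gamma> \<alpha> wc"
  shows "(\<lambda>x. comm (L x) (L' x)) \<in> lax_algebra atlas kd \<sigma> A K \<gamma> \<alpha> wc"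
    and "(\<lambda>x. L x - L' x) \<in> lax_algebra atlas kd \<sigma> A K \<gamma> \<alpha> wc"
proof -
  let ?Z = "A \<union> \<gamma> ` {1..K}"
  have finZ: "finite ?Z" using finA by simp
  have Lh: "\<And>x. x \<notin> ?Z \<Longrightarrow> in_lie kd \<sigma> (L x) \<and> holomorphic_at atlas L x"
    and Lm: "\<And>x. x \<in> ?Z \<Longrightarrow> meromorphic_at atlas L x"
    and Lt: "\<And>s. s \<in> {1..K} \<Longrightarrow> tyurin_cond kd \<sigma> (wc s) (\<alpha> s) L"
    using L unfolding lax_algebra_def by blast+
  have L'h: "\<And>x. x \<notin> ?Z \<Longrightarrow> in_lie kd \<sigma> (L' x) \<and> holomorphic_at atlas L' x"
    and L'm: "\<And>x. x \<in> ?Z \<Longrightarrow> meromorphic_at atlas L' x"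
    and L't: "\<And>s. s \<in> {1..K} \<Longrightarrow> tyurin_cond kd \<sigma> (wc s) (\<alpha> s) L'"
    using L' unfolding lax_algebra_def by blast+
  have evL: "eventually (\<lambda>\<zeta>. in_lie kd \<sigma> (in_coord (wc s) L \<zeta>)) (at 0)"
    and evL': "eventually (\<lambda>\<zeta>. in_lie kd \<sigma> (in_coord (wc s) L' \<zeta>)) (at 0)" if s: "s \<in> {1..K}" for s
    using lie_near[OF wc[rule_format, OF s] finZ, of "\<lambda>x. in_lie kd \<sigma> (L x)"]
          lie_near[OF wc[rule_format, OF s] finZ, of "\<lambda>x. in_lie kd \<sigma> (L' x)"] Lh L'h
    by (auto simp: in_coord_def)
  show "(\<lambda>x. comm (L x) (L' x)) \<in> lax_algebra atlas kd \<sigma> A K \<gamma> \<alpha> wc"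
    unfolding lax_algebra_def
  proof (intro CollectI conjI ballI allI impI)
    fix x assume "x \<notin> ?Z"
    then show "in_lie kd \<sigma> (comm (L x) (L' x))" "holomorphic_at atlas (\<lambda>x. comm (L x) (L' x)) x"
      using Lh L'h in_lie_comm holomorphic_at_comm(1)[OF surf] by blast+
  next
    fix x assume "x \<in> ?Z"
    then show "meromorphic_at atlas (\<lambda>x. comm (L x) (L' x)) x"
      using Lm L'm meromorphic_at_comm(1)[OF surf] by blast
  next
    fix s assume s: "s \<in> {1..K}"
    show "tyurin_cond kd \<sigma> (wc s) (\<alpha> s) (\<lambda>x. comm (L x) (L' x))"
      unfolding tyurin_tyF in_coord_comm
      by (rule tyF_comm[OF Lt[OF s, unfolded tyurin_tyF] L't[OF s, unfolded tyurin_tyF] evL[OF s] evL'[OF s] sp])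
         (use so s in auto)
  qed
  show "(\<lambda>x. L x - L' x) \<in> lax_algebra atlas kd \<sigma> A K \<gamma> \<alpha> wc"
    unfolding lax_algebra_def
  proof (intro CollectI conjI ballI allI impI)
    fix x assume "x \<notin> ?Z"
    then show "in_lie kd \<sigma> (L x - L' x)" "holomorphic_at atlas (\<lambda>x. L x - L' x) x"
      using Lh L'h in_lie_diff holomorphic_at_comm(2)[OF surf] by blast+
  next
    fix x assume "x \<in> ?Z"
    then show "meromorphic_at atlas (\<lambda>x. L x - L' x) x"
      using Lm L'm meromorphic_at_comm(2)[OF surf] by blast
  next
    fix s assume s: "s \<in> {1..K}"
    show "tyurin_cond kd \<sigma> (wc s) (\<alpha> s) (\<lambda>x. L x - L' x)"
      unfolding tyurin_tyF in_coord_diff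
      by (rule tyF_diff[OF Lt[OF s, unfolded tyurin_tyF] L't[OF s, unfolded tyurin_tyF]])
  qed
qed

lemma ord0_ge_comm:
  assumes "ord0_ge F a" "ord0_ge G b"
  shows "ord0_ge (\<lambda>\<zeta>. comm (F \<zeta>) (G \<zeta>)) (a + b)"
  unfolding comm_def
  by (rule ord0_ge_diff[OF ord0_ge_mult[OF assms]]) (use ord0_ge_mult[OF assms(2,1)] in \<open>simp add: add.commute\<close>)

lemma part2_local:
  fixes X Y :: "'n::finite mat"
  assumes Fx: "ord0_ge (\<lambda>\<zeta>. Fx \<zeta> - (if q = s then cmat (\<zeta> powi k) X else 0)) (k + 1)"
    and Fy: "ord0_ge (\<lambda>\<zeta>. Fy \<zeta> - (if q = p then cmat (\<zeta> powi m) Y else 0)) (m + 1)"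
    and Fxy: "s = p \<Longrightarrow> ord0_ge (\<lambda>\<zeta>. Fxy \<zeta> - (if q = s then cmat (\<zeta> powi (k + m)) (comm X Y) else 0)) (k + m + 1)"
  shows "ord0_ge (\<lambda>\<zeta>. comm (Fx \<zeta>) (Fy \<zeta>) - (if s = p then Fxy \<zeta> else 0)) (k + m + 1)"
proof -
  define Mx where "Mx = (\<lambda>\<zeta>::complex. if q = s then cmat (\<zeta> powi k) X else 0)"
  define My where "My = (\<lambda>\<zeta>::complex. if q = p then cmat (\<zeta> powi m) Y else 0)"
  have oMx: "ord0_ge Mx k" unfolding Mx_def by (cases "q = s") (auto intro: ord0_ge_monom ord0_ge_zero)
  have oMy: "ord0_ge My m" unfolding My_def by (cases "q = p") (auto intro: ord0_ge_monom ord0_ge_zero)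
  have Fx': "ord0_ge (\<lambda>\<zeta>. Fx \<zeta> - Mx \<zeta>) (k + 1)" using Fx by (simp add: Mx_def)
  have Fy': "ord0_ge (\<lambda>\<zeta>. Fy \<zeta> - My \<zeta>) (m + 1)" using Fy by (simp add: My_def)
  have oFy: "ord0_ge Fy m"
    using ord0_ge_add[OF ord0_ge_mono[OF Fy'] oMy] by simp
  have t1: "ord0_ge (\<lambda>\<zeta>. comm (Fx \<zeta> - Mx \<zeta>) (Fy \<zeta>)) (k + m + 1)"
    using ord0_ge_comm[OF Fx' oFy] by (simp add: algebra_simps)
  have t2: "ord0_ge (\<lambda>\<zeta>. comm (Mx \<zeta>) (Fy \<zeta> - My \<zeta>)) (k + m + 1)"
    using ord0_ge_comm[OF oMx Fy'] by (simp add: algebra_simps)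
  have D: "ord0_ge (\<lambda>\<zeta>. comm (Fx \<zeta>) (Fy \<zeta>) - comm (Mx \<zeta>) (My \<zeta>)) (k + m + 1)"
    by (rule ord0_ge_cong[OF ord0_ge_add[OF t1 t2]])
       (simp add: comm_def matrix_diff_ldistrib matrix_diff_rdistrib algebra_simps)
  have nz: "eventually (\<lambda>\<zeta>. \<zeta> \<noteq> 0) (at (0::complex))" by (simp add: eventually_at_filter)
  have MM: "eventually (\<lambda>\<zeta>. comm (Mx \<zeta>) (My \<zeta>) = (if q = s \<and> q = p then cmat (\<zeta> powi (k + m)) (comm X Y) else 0)) (at 0)"
    using nz by eventually_elim (auto simp: Mx_def My_def comm_def power_int_add mult.commute cmat_diff)
  show ?thesis
  proof (cases "s = p")
    case True
    have "ord0_ge (\<lambda>\<zeta>. (comm (Fx \<zeta>) (Fy \<zeta>) - comm (Mx \<zeta>) (My \<zeta>))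
        - (Fxy \<zeta> - (if q = s then cmat (\<zeta> powi (k + m)) (comm X Y) else 0))) (k + m + 1)"
      by (rule ord0_ge_diff[OF D Fxy[OF True]])
    then show ?thesis
      by (rule ord0_ge_cong) (use MM in \<open>eventually_elim, use True in auto\<close>)
  next
    case False
    show ?thesis
      by (rule ord0_ge_cong[OF D]) (use MM in \<open>eventually_elim, use False in auto\<close>)
  qed
qed


theorem proposition3p11:
  fixes atlas :: "('s::t2_space set \<times> ('s \<Rightarrow> complex)) set"
    and kd :: lie_kind and \<sigma> :: "'n::finite mat"
    and N M K :: nat and P Q \<gamma> :: "nat \<Rightarrow> 's" and \<alpha> :: "nat \<Rightarrow> complex^'n"
    and zc wc :: "nat \<Rightarrow> 's set \<times> ('s \<Rightarrow> complex)"
  defines "A \<equiv> P ` {1..N} \<union> Q ` {1..M}"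
  assumes surf: "compact_riemann_surface atlas"
    and NM: "N \<ge> 1" "M \<ge> 1"
    and inj_P: "inj_on P {1..N}" and inj_Q: "inj_on Q {1..M}"
    and IO_disj: "P ` {1..N} \<inter> Q ` {1..M} = {}"
    and inj_\<gamma>: "inj_on \<gamma> {1..K}" and W_disj: "\<gamma> ` {1..K} \<inter> A = {}"
    and sp_\<sigma>: "kd = SP \<Longrightarrow> transpose \<sigma> = - \<sigma> \<and> invertible \<sigma>"
    and so_\<alpha>: "kd = SO \<Longrightarrow> \<forall>s\<in>{1..K}. bil (\<alpha> s) (\<alpha> s) = 0"
    and wc: "\<forall>s\<in>{1..K}. local_coordinate_at atlas (\<gamma> s) (wc s)"
    and zc: "\<forall>p\<in>{1..N}. local_coordinate_at atlas (P p) (zc p)"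
  shows "(\<forall>m k L L'. L \<in> lax_filt atlas kd \<sigma> A K \<gamma> \<alpha> wc N zc m \<longrightarrow>
             L' \<in> lax_filt atlas kd \<sigma> A K \<gamma> \<alpha> wc N zc k \<longrightarrow>
             (\<lambda>x. comm (L x) (L' x)) \<in> lax_filt atlas kd \<sigma> A K \<gamma> \<alpha> wc N zc (m + k))
       \<and> (\<forall>X Y k m s p Xk Ym XYkm.
             in_lie kd \<sigma> X \<longrightarrow> in_lie kd \<sigma> Y \<longrightarrow> s \<in> {1..N} \<longrightarrow> p \<in> {1..N} \<longrightarrow>
             is_Z atlas kd \<sigma> A K \<gamma> \<alpha> wc N zc X k s Xk \<longrightarrow>
             is_Z atlas kd \<sigma> A K \<gamma> \<alpha> wc N zc Y m p Ym \<longrightarrow>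
             is_Z atlas kd \<sigma> A K \<gamma> \<alpha> wc N zc (comm X Y) (k + m) s XYkm \<longrightarrow>
             (\<lambda>x. comm (Xk x) (Ym x) - (if s = p then XYkm x else 0))
               \<in> lax_filt atlas kd \<sigma> A K \<gamma> \<alpha> wc N zc (k + m + 1))"
proof -
  have finA: "finite A" unfolding A_def by simp
  have st: "kd = SP \<Longrightarrow> transpose \<sigma> = - \<sigma>" using sp_\<sigma> by blast
  have cl1: "\<And>L L'. L \<in> lax_algebra atlas kd \<sigma> A K \<gamma> \<alpha> wc \<Longrightarrow> L' \<in> lax_algebra atlas kd \<sigma> A K \<gamma> \<alpha> wc
      \<Longrightarrow> (\<lambda>x. comm (L x) (L' x)) \<in> lax_algebra atlas kd \<sigma> A K \<gamma> \<alpha> wc"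
    using lax_closed(1)[OF surf finA wc] st so_\<alpha> by blast
  have cl2: "\<And>L L'. L \<in> lax_algebra atlas kd \<sigma> A K \<gamma> \<alpha> wc \<Longrightarrow> L' \<in> lax_algebra atlas kd \<sigma> A K \<gamma> \<alpha> wc
      \<Longrightarrow> (\<lambda>x. L x - L' x) \<in> lax_algebra atlas kd \<sigma> A K \<gamma> \<alpha> wc"
    using lax_closed(2)[OF surf finA wc] st so_\<alpha> by blast
  have coord: "\<And>q g. q \<in> {1..N} \<Longrightarrow> ord0_ge (\<lambda>\<zeta>. g (inv_into (fst (zc q)) (snd (zc q)) \<zeta>) (snd (zc q) (inv_into (fst (zc q)) (snd (zc q)) \<zeta>))) j
      \<Longrightarrow> ord0_ge (\<lambda>\<zeta>. g (inv_into (fst (zc q)) (snd (zc q)) \<zeta>) \<zeta>) j" for j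
  proof -
    fix q g assume q: "q \<in> {1..N}" and o: "ord0_ge (\<lambda>\<zeta>. g (inv_into (fst (zc q)) (snd (zc q)) \<zeta>) (snd (zc q) (inv_into (fst (zc q)) (snd (zc q)) \<zeta>))) j"
    show "ord0_ge (\<lambda>\<zeta>. g (inv_into (fst (zc q)) (snd (zc q)) \<zeta>) \<zeta>) j"
      by (rule ord0_ge_cong[OF o]) (use lc_ev_coord[OF zc[rule_format, OF q]] in \<open>eventually_elim, simp\<close>)
  qed
  show ?thesis
  proof (intro conjI allI impI)
    fix m k L L'
    assume L: "L \<in> lax_filt atlas kd \<sigma> A K \<gamma> \<alpha> wc N zc m" and L': "L' \<in> lax_filt atlas kd \<sigma> A K \<gamma> \<alpha> wc N zc k"
    have "(\<lambda>x. comm (L x) (L' x)) \<in> lax_algebra atlas kd \<sigma> A K \<gamma> \<alpha> wc"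
      by (rule cl1) (use L L' in \<open>auto simp: lax_filt_def\<close>)
    moreover have "ord_ge (zc q) (\<lambda>x. comm (L x) (L' x)) (m + k)" if q: "q \<in> {1..N}" for q
      using ord0_ge_comm[of "in_coord (zc q) L" m "in_coord (zc q) L'" k] L L' q
      by (auto simp: lax_filt_def ord_ge_def in_coord_def)
    ultimately show "(\<lambda>x. comm (L x) (L' x)) \<in> lax_filt atlas kd \<sigma> A K \<gamma> \<alpha> wc N zc (m + k)"
      by (simp add: lax_filt_def)
  next
    fix X Y k m s p Xk Ym XYkm
    assume X: "in_lie kd \<sigma> X" and Y: "in_lie kd \<sigma> Y" and s: "s \<in> {1..N}" and p: "p \<in> {1..N}"
      and Zx: "is_Z atlas kd \<sigma> A K \<gamma> \<alpha> wc N zc X k s Xk"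
      and Zy: "is_Z atlas kd \<sigma> A K \<gamma> \<alpha> wc N zc Y m p Ym"
      and Zxy: "is_Z atlas kd \<sigma> A K \<gamma> \<alpha> wc N zc (comm X Y) (k + m) s XYkm"
    have mem: "(\<lambda>x. comm (Xk x) (Ym x) - (if s = p then XYkm x else 0)) \<in> lax_algebra atlas kd \<sigma> A K \<gamma> \<alpha> wc"
    proof (cases "s = p")
      case True
      then show ?thesis using cl2[OF cl1] Zx Zy Zxy by (simp add: is_Z_def)
    next
      case False
      then show ?thesis using cl1 Zx Zy by (simp add: is_Z_def)
    qed
    moreover have "ord_ge (zc q) (\<lambda>x. comm (Xk x) (Ym x) - (if s = p then XYkm x else 0)) (k + m + 1)"
      if q: "q \<in> {1..N}" for q
    proof -
      let ?i = "inv_into (fst (zc q)) (snd (zc q))"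
      have ox: "ord0_ge (\<lambda>\<zeta>. Xk (?i \<zeta>) - (if q = s then cmat (\<zeta> powi k) X else 0)) (k + 1)"
        using Zx q coord[OF q, of "\<lambda>y z. Xk y - (if q = s then cmat (z powi k) X else 0)" "k + 1"]
        by (auto simp: is_Z_def ord_ge_def in_coord_def)
      have oy: "ord0_ge (\<lambda>\<zeta>. Ym (?i \<zeta>) - (if q = p then cmat (\<zeta> powi m) Y else 0)) (m + 1)"
        using Zy q coord[OF q, of "\<lambda>y z. Ym y - (if q = p then cmat (z powi m) Y else 0)" "m + 1"]
        by (auto simp: is_Z_def ord_ge_def in_coord_def)
      have oxy: "ord0_ge (\<lambda>\<zeta>. XYkm (?i \<zeta>) - (if q = s then cmat (\<zeta> powi (k + m)) (comm X Y) else 0)) (k + m + 1)"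
        using Zxy q coord[OF q, of "\<lambda>y z. XYkm y - (if q = s then cmat (z powi (k + m)) (comm X Y) else 0)" "k + m + 1"]
        by (auto simp: is_Z_def ord_ge_def in_coord_def)
      show ?thesis
        using part2_local[OF ox oy oxy] by (simp add: ord_ge_def in_coord_def)
    qed
    ultimately show "(\<lambda>x. comm (Xk x) (Ym x) - (if s = p then XYkm x else 0)) \<in> lax_filt atlas kd \<sigma> A K \<gamma> \<alpha> wc N zc (k + m + 1)"
      by (simp add: lax_filt_def)
  qed
qed



end
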